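(* For every integer $r\ge5$, \[ f_{r-1}(r+1,r)=\rho_{r-1}\big(T(r+2,r)\big)=\frac{4r-4}{r+2}. \]
   Context: $\mathcal{G}(\Delta,\omega)$ denotes the class of finite simple graphs $G$ with maximum degree $\Delta(G)\le\Delta$ and clique number $\omega(G)\le\omega$. $k_t(G)$ is the number of copies of $K_t$ in $G$ and $\rho_t(G)=k_t(G)/|V(G)|$. $f_t(\Delta,\omega)=\sup\{\rho_t(G): G\in\mathcal{G}(\Delta,\omega),\ |V(G)|\ge 1\}$. $T(n,r)$ denotes the $r$-partite Turán graph on $n$ vertices; for $r\ge 4$, $T(r+2,r)$ has $r-2$ parts of size $1$ and two parts of size $2$. *)

theory Defs
  imports Complex_Main
begin

text \<open>Every finite
simple graph is isomorphic to one on natural-number vertices, and all quantities below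
are isomorphism invariant.\<close>

type_synonym graph = "nat set \<times> nat set set"

definition simple_graph :: "graph \<Rightarrow> bool" where
  "simple_graph G \<longleftrightarrow> finite (fst G) \<and>
     (\<forall>e\<in>snd G. e \<subseteq> fst G \<and> card e = 2)"

definition degree :: "graph \<Rightarrow> nat \<Rightarrow> nat" where
  "degree G v = card {u \<in> fst G. {u, v} \<in> snd G}"

definition max_degree :: "graph \<Rightarrow> nat" where
  "max_degree G = Max (insert 0 (degree G ` fst G))"

definition is_clique :: "graph \<Rightarrow> nat set \<Rightarrow> bool" where
  "is_clique G S \<longleftrightarrow> S \<subseteq> fst G \<and> (\<forall>u\<in>S. \<forall>v\<in>S. u \<noteq> v \<longrightarrow> {u, v} \<in> snd G)"

definition clique_number :: "graph \<Rightarrow> nat" where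
  "clique_number G = Max (card ` {S. is_clique G S})"

definition k_count :: "nat \<Rightarrow> graph \<Rightarrow> nat" where
  "k_count t G = card {S. is_clique G S \<and> card S = t}"

definition rho :: "nat \<Rightarrow> graph \<Rightarrow> real" where
  "rho t G = real (k_count t G) / real (card (fst G))"

definition graph_class :: "nat \<Rightarrow> nat \<Rightarrow> graph set" where
  "graph_class \<Delta> \<omega> = {G. simple_graph G \<and> max_degree G \<le> \<Delta> \<and> clique_number G \<le> \<omega>}"

definition f_sup :: "nat \<Rightarrow> nat \<Rightarrow> nat \<Rightarrow> real" where
  "f_sup t \<Delta> \<omega> = Sup {rho t G | G. G \<in> graph_class \<Delta> \<omega> \<and> card (fst G) \<ge> 1}"

text \<open>Turan graph T(n,r): vertices 0..n-1, vertex i in part (i mod r), edges between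
different parts (parts have sizes differing by at most one).\<close>
definition turan_graph :: "nat \<Rightarrow> nat \<Rightarrow> graph" where
  "turan_graph n r = ({0..<n}, {{u, v} | u v. u < n \<and> v < n \<and> u mod r \<noteq> v mod r})"

end

theory Submission
  imports Defs
begin


lemma three_eq:
  assumes "card T = 3" "x \<in> T" "y \<in> T" "z \<in> T" "x \<noteq> y" "y \<noteq> z" "x \<noteq> z"
  shows "T = {x,y,z}"
proof -
  have f: "finite T" using assms(1) card.infinite by fastforce
  have s: "{x,y,z} \<subseteq> T" using assms by auto
  have "card {x,y,z} = 3" using assms by auto
  then show ?thesis using card_subset_eq[OF f s] assms(1) by simp
qed

lemma card3_ex:
  assumes "card T = 3" "x \<in> T" "y \<in> T" "x \<noteq> y"
  shows "\<exists>z. z \<in> T \<and> z \<noteq> x \<and> z \<noteq> y \<and> T = {x,y,z}"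
proof -
  have f: "finite T" using assms(1) card.infinite by fastforce
  have "card (T - {x,y}) = 1" using assms f by (simp add: card_Diff_subset)
  then obtain z where "T - {x,y} = {z}" by (auto simp: card_Suc_eq)
  then have z: "z \<in> T" "z \<noteq> x" "z \<noteq> y" by auto
  have "T = {x,y,z}" using three_eq[OF assms(1) assms(2,3) z(1)] assms(4) z by simp
  then show ?thesis using z by blast
qed

lemma blk:
  assumes "finite W" "x \<in> W" "y \<in> W" "x \<noteq> y" "X \<subseteq> W" "x \<notin> X" "y \<notin> X"
  shows "card {T. T \<subseteq> W \<and> card T = 3 \<and> x \<in> T \<and> y \<in> T \<and> T \<inter> X = {}} \<le> card W - 2 - card X"
proof -
  have sub: "{T. T \<subseteq> W \<and> card T = 3 \<and> x \<in> T \<and> y \<in> T \<and> T \<inter> X = {}} \<subseteq> (\<lambda>z. {x,y,z}) ` (W - ({x,y} \<union> X))"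
  proof
    fix T assume "T \<in> {T. T \<subseteq> W \<and> card T = 3 \<and> x \<in> T \<and> y \<in> T \<and> T \<inter> X = {}}"
    then have T: "T \<subseteq> W" "card T = 3" "x \<in> T" "y \<in> T" "T \<inter> X = {}" by auto
    obtain z where z: "z \<in> T" "z \<noteq> x" "z \<noteq> y" "T = {x,y,z}" using card3_ex[OF T(2,3,4) assms(4)] by blast
    have "z \<in> W - ({x,y} \<union> X)" using z T by auto
    then show "T \<in> (\<lambda>z. {x,y,z}) ` (W - ({x,y} \<union> X))" using z(4) by blast
  qed
  have "card {T. T \<subseteq> W \<and> card T = 3 \<and> x \<in> T \<and> y \<in> T \<and> T \<inter> X = {}} \<le> card ((\<lambda>z. {x,y,z}) ` (W - ({x,y} \<union> X)))"
    using sub assms(1) by (intro card_mono) auto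
  also have "\<dots> \<le> card (W - ({x,y} \<union> X))" by (rule card_image_le) (use assms(1) in auto)
  also have "card (W - ({x,y} \<union> X)) = card W - card ({x,y} \<union> X)"
    using assms by (intro card_Diff_subset) (auto intro: finite_subset)
  also have "card ({x,y} \<union> X) = 2 + card X"
    using assms finite_subset[OF assms(5) assms(1)] by simp
  finally show ?thesis by simp
qed

lemma blk3:
  assumes "x \<noteq> y" "y \<noteq> z" "x \<noteq> z"
  shows "card {T. T \<subseteq> W \<and> card T = 3 \<and> x \<in> T \<and> y \<in> T \<and> z \<in> T} \<le> 1"
proof -
  have "{T. T \<subseteq> W \<and> card T = 3 \<and> x \<in> T \<and> y \<in> T \<and> z \<in> T} \<subseteq> {{x,y,z}}"
  proof
    fix T assume "T \<in> {T. T \<subseteq> W \<and> card T = 3 \<and> x \<in> T \<and> y \<in> T \<and> z \<in> T}"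
    then have "T = {x,y,z}" using three_eq[of T x y z] assms by auto
    then show "T \<in> {{x,y,z}}" by simp
  qed
  then have "card {T. T \<subseteq> W \<and> card T = 3 \<and> x \<in> T \<and> y \<in> T \<and> z \<in> T} \<le> card {{x,y,z}}"
    by (intro card_mono) auto
  then show ?thesis by simp
qed

lemma blk4:
  assumes "x \<noteq> y" "y \<noteq> z" "x \<noteq> z" "w \<noteq> x" "w \<noteq> y" "w \<noteq> z"
  shows "{T. card T = 3 \<and> x \<in> T \<and> y \<in> T \<and> z \<in> T \<and> w \<in> T} = {}"
proof -
  { fix T assume "card T = 3" "x \<in> T" "y \<in> T" "z \<in> T" "w \<in> T"
    then have "T = {x,y,z}" using three_eq[of T x y z] assms by auto
    then have False using \<open>w \<in> T\<close> assms by auto }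
  then show ?thesis by auto
qed

abbreviation blks :: "nat set \<Rightarrow> nat \<Rightarrow> nat \<Rightarrow> nat set \<Rightarrow> nat set set" where
  "blks W x y X \<equiv> {T. T \<subseteq> W \<and> card T = 3 \<and> x \<in> T \<and> y \<in> T \<and> T \<inter> X = {}}"

abbreviation tri :: "nat set \<Rightarrow> nat \<Rightarrow> nat \<Rightarrow> nat \<Rightarrow> nat set set" where
  "tri W x y z \<equiv> {T. T \<subseteq> W \<and> card T = 3 \<and> x \<in> T \<and> y \<in> T \<and> z \<in> T}"

lemma card_Un4: "finite A \<Longrightarrow> finite B \<Longrightarrow> finite C \<Longrightarrow> finite D \<Longrightarrow>
   card (A \<union> B \<union> C \<union> D) \<le> card A + card B + card C + card D"
proof -
  assume f: "finite A" "finite B" "finite C" "finite D"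
  have "card (A \<union> B \<union> C \<union> D) \<le> card (A \<union> B \<union> C) + card D" by (rule card_Un_le)
  also have "card (A \<union> B \<union> C) \<le> card (A \<union> B) + card C" by (rule card_Un_le)
  also have "card (A \<union> B) \<le> card A + card B" by (rule card_Un_le)
  finally show ?thesis by simp
qed

lemma card_Un3: "finite A \<Longrightarrow> finite B \<Longrightarrow> finite C \<Longrightarrow>
   card (A \<union> B \<union> C) \<le> card A + card B + card C"
proof -
  have "card (A \<union> B \<union> C) \<le> card (A \<union> B) + card C" by (rule card_Un_le)
  also have "card (A \<union> B) \<le> card A + card B" by (rule card_Un_le)
  finally show ?thesis by simp
qed

lemma fin_fam: "finite W \<Longrightarrow> finite {T. T \<subseteq> W \<and> P T}"
  by (rule finite_subset[of _ "Pow W"]) auto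

lemma fin_blks: "finite W \<Longrightarrow> finite (blks W x y X)"
  by (rule finite_subset[of _ "Pow W"]) auto

lemma fin_tri: "finite W \<Longrightarrow> finite (tri W x y z)"
  by (rule finite_subset[of _ "Pow W"]) auto

lemma K1:
  fixes W :: "nat set"
  assumes "finite W" "a \<in> W" "b \<in> W" "c \<in> W" "d \<in> W"
    "a \<noteq> b" "a \<noteq> c" "a \<noteq> d" "b \<noteq> c" "b \<noteq> d" "c \<noteq> d"
  shows "card {T. T \<subseteq> W \<and> card T = 3 \<and> (a \<in> T \<or> b \<in> T) \<and> (c \<in> T \<or> d \<in> T)} \<le> 4 * card W - 12"
proof -
  have "{T. T \<subseteq> W \<and> card T = 3 \<and> (a \<in> T \<or> b \<in> T) \<and> (c \<in> T \<or> d \<in> T)} \<subseteq>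
     blks W a c {} \<union> blks W a d {c} \<union> blks W b c {a} \<union> blks W b d {a,c}" by blast
  then have "card {T. T \<subseteq> W \<and> card T = 3 \<and> (a \<in> T \<or> b \<in> T) \<and> (c \<in> T \<or> d \<in> T)} \<le>
     card (blks W a c {} \<union> blks W a d {c} \<union> blks W b c {a} \<union> blks W b d {a,c})"
    by (intro card_mono) (simp_all add: fin_blks assms(1))
  also have "\<dots> \<le> card (blks W a c {}) + card (blks W a d {c}) + card (blks W b c {a}) + card (blks W b d {a,c})"
    by (intro card_Un4) (simp_all add: fin_blks assms(1))
  also have "\<dots> \<le> (card W - 2 - 0) + (card W - 2 - 1) + (card W - 2 - 1) + (card W - 2 - 2)"
  proof -
    have 1: "card (blks W a c {}) \<le> card W - 2 - 0" using blk[OF assms(1), of a c "{}"] assms by simp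
    have 2: "card (blks W a d {c}) \<le> card W - 2 - 1" using blk[OF assms(1), of a d "{c}"] assms by simp
    have 3: "card (blks W b c {a}) \<le> card W - 2 - 1" using blk[OF assms(1), of b c "{a}"] assms by simp
    have 4: "card (blks W b d {a,c}) \<le> card W - 2 - 2" using blk[OF assms(1), of b d "{a,c}"] assms by simp
    from 1 2 3 4 show ?thesis by linarith
  qed
  also have "\<dots> = 4 * card W - 12"
  proof -
    have "card {a,b,c,d} \<le> card W" using assms by (intro card_mono) auto
    then have "card W \<ge> 4" using assms by simp
    then show ?thesis by simp
  qed
  finally show ?thesis .
qed

lemma card_ge_of_sub: "finite W \<Longrightarrow> A \<subseteq> W \<Longrightarrow> card A \<le> card W"
  by (rule card_mono)

lemma K2:
  fixes W :: "nat set"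
  assumes "finite W" "a \<in> W" "b \<in> W" "c \<in> W" "a \<noteq> b" "a \<noteq> c" "b \<noteq> c"
  shows "card {T. T \<subseteq> W \<and> card T = 3 \<and> (a \<in> T \<or> b \<in> T) \<and> (b \<in> T \<or> c \<in> T) \<and> (a \<in> T \<or> c \<in> T)} \<le> 3 * card W - 8"
proof -
  have "{T. T \<subseteq> W \<and> card T = 3 \<and> (a \<in> T \<or> b \<in> T) \<and> (b \<in> T \<or> c \<in> T) \<and> (a \<in> T \<or> c \<in> T)} \<subseteq>
     blks W a b {} \<union> blks W a c {b} \<union> blks W b c {a}" by blast
  then have "card {T. T \<subseteq> W \<and> card T = 3 \<and> (a \<in> T \<or> b \<in> T) \<and> (b \<in> T \<or> c \<in> T) \<and> (a \<in> T \<or> c \<in> T)} \<le>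
     card (blks W a b {} \<union> blks W a c {b} \<union> blks W b c {a})"
    by (intro card_mono) (simp_all add: fin_blks assms(1))
  also have "\<dots> \<le> card (blks W a b {}) + card (blks W a c {b}) + card (blks W b c {a})"
    by (intro card_Un3) (simp_all add: fin_blks assms(1))
  also have "\<dots> \<le> (card W - 2 - 0) + (card W - 2 - 1) + (card W - 2 - 1)"
  proof -
    have 1: "card (blks W a b {}) \<le> card W - 2 - 0" using blk[OF assms(1), of a b "{}"] assms by simp
    have 2: "card (blks W a c {b}) \<le> card W - 2 - 1" using blk[OF assms(1), of a c "{b}"] assms by simp
    have 3: "card (blks W b c {a}) \<le> card W - 2 - 1" using blk[OF assms(1), of b c "{a}"] assms by simp
    from 1 2 3 show ?thesis by linarith
  qed
  also have "\<dots> = 3 * card W - 8"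
  proof -
    have "card {a,b,c} \<le> card W" using assms by (intro card_mono) auto
    then have "card W \<ge> 3" using assms by simp
    then show ?thesis by simp
  qed
  finally show ?thesis .
qed

lemma K3:
  fixes W :: "nat set"
  assumes "finite W" "a \<in> W" "b \<in> W" "c \<in> W" "d \<in> W"
    "a \<noteq> b" "a \<noteq> c" "a \<noteq> d" "b \<noteq> c" "b \<noteq> d" "c \<noteq> d"
  shows "card {T. T \<subseteq> W \<and> card T = 3 \<and> (a \<in> T \<or> b \<in> T) \<and> (b \<in> T \<or> c \<in> T) \<and> (c \<in> T \<or> d \<in> T)} \<le> 3 * card W - 8"
proof -
  have "{T. T \<subseteq> W \<and> card T = 3 \<and> (a \<in> T \<or> b \<in> T) \<and> (b \<in> T \<or> c \<in> T) \<and> (c \<in> T \<or> d \<in> T)} \<subseteq>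
     blks W b c {} \<union> blks W b d {c} \<union> blks W a c {b}" by blast
  then have "card {T. T \<subseteq> W \<and> card T = 3 \<and> (a \<in> T \<or> b \<in> T) \<and> (b \<in> T \<or> c \<in> T) \<and> (c \<in> T \<or> d \<in> T)} \<le>
     card (blks W b c {} \<union> blks W b d {c} \<union> blks W a c {b})"
    by (intro card_mono) (simp_all add: fin_blks assms(1))
  also have "\<dots> \<le> card (blks W b c {}) + card (blks W b d {c}) + card (blks W a c {b})"
    by (intro card_Un3) (simp_all add: fin_blks assms(1))
  also have "\<dots> \<le> (card W - 2 - 0) + (card W - 2 - 1) + (card W - 2 - 1)"
  proof -
    have 1: "card (blks W b c {}) \<le> card W - 2 - 0" using blk[OF assms(1), of b c "{}"] assms by simp
    have 2: "card (blks W b d {c}) \<le> card W - 2 - 1" using blk[OF assms(1), of b d "{c}"] assms by simp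
    have 3: "card (blks W a c {b}) \<le> card W - 2 - 1" using blk[OF assms(1), of a c "{b}"] assms by simp
    from 1 2 3 show ?thesis by linarith
  qed
  also have "\<dots> = 3 * card W - 8"
  proof -
    have "card {a,b,c} \<le> card W" using assms by (intro card_mono) auto
    then have "card W \<ge> 3" using assms by simp
    then show ?thesis by simp
  qed
  finally show ?thesis .
qed

lemma K4:
  fixes W :: "nat set"
  assumes "finite W" "a \<in> W" "b \<in> W" "c \<in> W" "d \<in> W" "e \<in> W"
    "a \<noteq> b" "a \<noteq> c" "a \<noteq> d" "a \<noteq> e" "b \<noteq> c" "b \<noteq> d" "b \<noteq> e" "c \<noteq> d" "c \<noteq> e" "d \<noteq> e"
  shows "card {T. T \<subseteq> W \<and> card T = 3 \<and> (a \<in> T \<or> b \<in> T) \<and> (a \<in> T \<or> e \<in> T) \<and> (c \<in> T \<or> d \<in> T)} \<le> 2 * card W - 3"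
proof -
  have "{T. T \<subseteq> W \<and> card T = 3 \<and> (a \<in> T \<or> b \<in> T) \<and> (a \<in> T \<or> e \<in> T) \<and> (c \<in> T \<or> d \<in> T)} \<subseteq>
     blks W a c {} \<union> blks W a d {c} \<union> tri W b e c \<union> tri W b e d" by blast
  then have "card {T. T \<subseteq> W \<and> card T = 3 \<and> (a \<in> T \<or> b \<in> T) \<and> (a \<in> T \<or> e \<in> T) \<and> (c \<in> T \<or> d \<in> T)} \<le>
     card (blks W a c {} \<union> blks W a d {c} \<union> tri W b e c \<union> tri W b e d)"
    by (intro card_mono) (simp_all add: fin_blks fin_tri assms(1))
  also have "\<dots> \<le> card (blks W a c {}) + card (blks W a d {c}) + card (tri W b e c) + card (tri W b e d)"
    by (intro card_Un4) (simp_all add: fin_blks fin_tri assms(1))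
  also have "\<dots> \<le> (card W - 2 - 0) + (card W - 2 - 1) + 1 + 1"
  proof -
    have 1: "card (blks W a c {}) \<le> card W - 2 - 0" using blk[OF assms(1), of a c "{}"] assms by simp
    have 2: "card (blks W a d {c}) \<le> card W - 2 - 1" using blk[OF assms(1), of a d "{c}"] assms by simp
    have 3: "card (tri W b e c) \<le> 1" using blk3[of b e c W] assms by simp
    have 4: "card (tri W b e d) \<le> 1" using blk3[of b e d W] assms by simp
    from 1 2 3 4 show ?thesis by linarith
  qed
  also have "\<dots> = 2 * card W - 3"
  proof -
    have "card {a,b,c} \<le> card W" using assms by (intro card_mono) auto
    then have "card W \<ge> 3" using assms by simp
    then show ?thesis by simp
  qed
  finally show ?thesis .
qed

lemma K6:
  fixes W :: "nat set"
  assumes "finite W" "x \<in> W" "p \<in> W" "q \<in> W" "p \<noteq> q" "p \<noteq> x" "q \<noteq> x"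
    "y1 \<noteq> y2" "y1 \<noteq> y3" "y2 \<noteq> y3"
  shows "card {T. T \<subseteq> W \<and> card T = 3 \<and> (x \<in> T \<or> y1 \<in> T) \<and> (x \<in> T \<or> y2 \<in> T) \<and> (x \<in> T \<or> y3 \<in> T) \<and> (p \<in> T \<or> q \<in> T)} \<le> 2 * card W - 4"
proof -
  have "{T. T \<subseteq> W \<and> card T = 3 \<and> (x \<in> T \<or> y1 \<in> T) \<and> (x \<in> T \<or> y2 \<in> T) \<and> (x \<in> T \<or> y3 \<in> T) \<and> (p \<in> T \<or> q \<in> T)} \<subseteq>
     blks W x p {} \<union> blks W x q {p} \<union> tri W y1 y2 y3" by blast
  then have "card {T. T \<subseteq> W \<and> card T = 3 \<and> (x \<in> T \<or> y1 \<in> T) \<and> (x \<in> T \<or> y2 \<in> T) \<and> (x \<in> T \<or> y3 \<in> T) \<and> (p \<in> T \<or> q \<in> T)} \<le>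
     card (blks W x p {} \<union> blks W x q {p} \<union> tri W y1 y2 y3)"
    by (intro card_mono) (simp_all add: fin_blks fin_tri assms(1))
  also have "\<dots> \<le> card (blks W x p {}) + card (blks W x q {p}) + card (tri W y1 y2 y3)"
    by (intro card_Un3) (simp_all add: fin_blks fin_tri assms(1))
  also have "\<dots> \<le> (card W - 2 - 0) + (card W - 2 - 1) + 1"
  proof -
    have 1: "card (blks W x p {}) \<le> card W - 2 - 0" using blk[OF assms(1), of x p "{}"] assms by simp
    have 2: "card (blks W x q {p}) \<le> card W - 2 - 1" using blk[OF assms(1), of x q "{p}"] assms by simp
    have 3: "card (tri W y1 y2 y3) \<le> 1" using blk3[of y1 y2 y3 W] assms by simp
    from 1 2 3 show ?thesis by linarith
  qed
  also have "\<dots> = 2 * card W - 4"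
  proof -
    have "card {x,p,q} \<le> card W" using assms by (intro card_mono) auto
    then have "card W \<ge> 3" using assms by simp
    then show ?thesis by simp
  qed
  finally show ?thesis .
qed

lemma K6':
  fixes W :: "nat set"
  assumes "finite W" "x \<in> W" "p \<in> W" "q \<in> W" "p \<noteq> q" "p \<noteq> x" "q \<noteq> x"
    "y1 \<noteq> y2" "y1 \<noteq> y3" "y2 \<noteq> y3" "p \<noteq> y1" "p \<noteq> y2" "p \<noteq> y3" "q \<noteq> y1" "q \<noteq> y2" "q \<noteq> y3"
  shows "card {T. T \<subseteq> W \<and> card T = 3 \<and> (x \<in> T \<or> y1 \<in> T) \<and> (x \<in> T \<or> y2 \<in> T) \<and> (x \<in> T \<or> y3 \<in> T) \<and> (p \<in> T \<or> q \<in> T)} \<le> 2 * card W - 5"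
proof -
  have e1: "{T. card T = 3 \<and> y1 \<in> T \<and> y2 \<in> T \<and> y3 \<in> T \<and> p \<in> T} = {}"
    using blk4[of y1 y2 y3 p] assms by auto
  have e2: "{T. card T = 3 \<and> y1 \<in> T \<and> y2 \<in> T \<and> y3 \<in> T \<and> q \<in> T} = {}"
    using blk4[of y1 y2 y3 q] assms by auto
  have "{T. T \<subseteq> W \<and> card T = 3 \<and> (x \<in> T \<or> y1 \<in> T) \<and> (x \<in> T \<or> y2 \<in> T) \<and> (x \<in> T \<or> y3 \<in> T) \<and> (p \<in> T \<or> q \<in> T)} \<subseteq>
     blks W x p {} \<union> blks W x q {p}"
  proof
    fix T assume T: "T \<in> {T. T \<subseteq> W \<and> card T = 3 \<and> (x \<in> T \<or> y1 \<in> T) \<and> (x \<in> T \<or> y2 \<in> T) \<and> (x \<in> T \<or> y3 \<in> T) \<and> (p \<in> T \<or> q \<in> T)}"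
    show "T \<in> blks W x p {} \<union> blks W x q {p}"
    proof (cases "x \<in> T")
      case True then show ?thesis using T by blast
    next
      case False
      then have "y1 \<in> T" "y2 \<in> T" "y3 \<in> T" "card T = 3" "p \<in> T \<or> q \<in> T" using T by auto
      then have False using e1 e2 by blast
      then show ?thesis ..
    qed
  qed
  then have "card {T. T \<subseteq> W \<and> card T = 3 \<and> (x \<in> T \<or> y1 \<in> T) \<and> (x \<in> T \<or> y2 \<in> T) \<and> (x \<in> T \<or> y3 \<in> T) \<and> (p \<in> T \<or> q \<in> T)} \<le>
     card (blks W x p {} \<union> blks W x q {p})"
    by (intro card_mono) (simp_all add: fin_blks assms(1))
  also have "\<dots> \<le> card (blks W x p {}) + card (blks W x q {p})"
    by (rule card_Un_le)
  also have "\<dots> \<le> (card W - 2 - 0) + (card W - 2 - 1)"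
  proof -
    have 1: "card (blks W x p {}) \<le> card W - 2 - 0" using blk[OF assms(1), of x p "{}"] assms by simp
    have 2: "card (blks W x q {p}) \<le> card W - 2 - 1" using blk[OF assms(1), of x q "{p}"] assms by simp
    from 1 2 show ?thesis by linarith
  qed
  also have "\<dots> = 2 * card W - 5"
  proof -
    have "card {x,p,q} \<le> card W" using assms by (intro card_mono) auto
    then have "card W \<ge> 3" using assms by simp
    then show ?thesis by simp
  qed
  finally show ?thesis .
qed

lemma K5:
  fixes W :: "nat set"
  assumes "a \<noteq> c" "a \<noteq> d" "a \<noteq> e" "a \<noteq> f" "b \<noteq> c" "b \<noteq> d" "b \<noteq> e" "b \<noteq> f"
    "c \<noteq> e" "c \<noteq> f" "d \<noteq> e" "d \<noteq> f"
  shows "card {T. T \<subseteq> W \<and> card T = 3 \<and> (a \<in> T \<or> b \<in> T) \<and> (c \<in> T \<or> d \<in> T) \<and> (e \<in> T \<or> f \<in> T)} \<le> 8"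
proof -
  have "{T. T \<subseteq> W \<and> card T = 3 \<and> (a \<in> T \<or> b \<in> T) \<and> (c \<in> T \<or> d \<in> T) \<and> (e \<in> T \<or> f \<in> T)} \<subseteq>
    (\<lambda>(x,y,z). {x,y,z}) ` ({a,b} \<times> {c,d} \<times> {e,f})"
  proof
    fix T assume T: "T \<in> {T. T \<subseteq> W \<and> card T = 3 \<and> (a \<in> T \<or> b \<in> T) \<and> (c \<in> T \<or> d \<in> T) \<and> (e \<in> T \<or> f \<in> T)}"
    then obtain x y z where xyz: "x \<in> {a,b}" "y \<in> {c,d}" "z \<in> {e,f}" "x \<in> T" "y \<in> T" "z \<in> T" by blast
    have ne: "x \<noteq> y" "y \<noteq> z" "x \<noteq> z" using xyz(1-3) assms by auto
    have "T = {x,y,z}" using three_eq[of T x y z] T xyz ne by auto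
    moreover have "(x,y,z) \<in> {a,b} \<times> {c,d} \<times> {e,f}" using xyz(1-3) by (simp only: mem_Times_iff fst_conv snd_conv)
    ultimately show "T \<in> (\<lambda>(x,y,z). {x,y,z}) ` ({a,b} \<times> {c,d} \<times> {e,f})"
      by (metis (no_types, lifting) case_prod_conv image_eqI)
  qed
  then have "card {T. T \<subseteq> W \<and> card T = 3 \<and> (a \<in> T \<or> b \<in> T) \<and> (c \<in> T \<or> d \<in> T) \<and> (e \<in> T \<or> f \<in> T)} \<le>
    card ((\<lambda>(x,y,z). {x,y,z}) ` ({a,b} \<times> {c,d} \<times> {e,f}))" by (intro card_mono) auto
  also have "\<dots> \<le> card ({a,b} \<times> {c,d} \<times> {e,f})" by (rule card_image_le) auto
  also have "\<dots> \<le> 8"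
  proof -
    have "card ({a,b} \<times> {c,d} \<times> {e,f}) = card {a,b} * (card {c,d} * card {e,f})" by (simp only: card_cartesian_product)
    moreover have "card {a,b} \<le> 2" "card {c,d} \<le> 2" "card {e,f} \<le> 2" by (auto simp: card_insert_if)
    then have "card {a,b} * (card {c,d} * card {e,f}) \<le> 2 * (2 * 2)" by (intro mult_le_mono)
    ultimately show ?thesis by simp
  qed
  finally show ?thesis .
qed

lemma K7:
  fixes W :: "nat set"
  assumes "finite W" "p \<in> W" "q \<in> W" "p \<noteq> q"
  shows "card {T. T \<subseteq> W \<and> card T = 2 \<and> (p \<in> T \<or> q \<in> T)} \<le> 2 * card W - 3"
proof -
  have "{T. T \<subseteq> W \<and> card T = 2 \<and> (p \<in> T \<or> q \<in> T)} \<subseteq> (\<lambda>z. {p,z}) ` (W - {p}) \<union> (\<lambda>z. {q,z}) ` (W - {p,q})"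
  proof
    fix T assume T: "T \<in> {T. T \<subseteq> W \<and> card T = 2 \<and> (p \<in> T \<or> q \<in> T)}"
    then obtain u w where uw: "T = {u,w}" "u \<noteq> w" by (auto simp: card_2_iff)
    show "T \<in> (\<lambda>z. {p,z}) ` (W - {p}) \<union> (\<lambda>z. {q,z}) ` (W - {p,q})"
    proof (cases "p \<in> T")
      case True
      then have "T = {p, if u = p then w else u}" using uw by auto
      moreover have "(if u = p then w else u) \<in> W - {p}" using uw T True by auto
      ultimately show ?thesis by blast
    next
      case False
      then have "q \<in> T" using T by auto
      then have "T = {q, if u = q then w else u}" using uw by auto
      moreover have "(if u = q then w else u) \<in> W - {p,q}" using uw T False \<open>q \<in> T\<close> by auto
      ultimately show ?thesis by blast
    qed
  qed
  then have "card {T. T \<subseteq> W \<and> card T = 2 \<and> (p \<in> T \<or> q \<in> T)} \<le> card ((\<lambda>z. {p,z}) ` (W - {p}) \<union> (\<lambda>z. {q,z}) ` (W - {p,q}))"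
    using assms(1) by (intro card_mono) auto
  also have "\<dots> \<le> card ((\<lambda>z. {p,z}) ` (W - {p})) + card ((\<lambda>z. {q,z}) ` (W - {p,q}))" by (rule card_Un_le)
  also have "\<dots> \<le> card (W - {p}) + card (W - {p,q})"
    by (intro add_mono card_image_le) (use assms(1) in auto)
  also have "\<dots> = 2 * card W - 3" using assms by (simp add: card_Diff_subset)
  finally show ?thesis .
qed

lemma three_elems:
  assumes "finite D" "card D \<ge> 3"
  shows "\<exists>x\<in>D. \<exists>y\<in>D. \<exists>z\<in>D. x \<noteq> y \<and> y \<noteq> z \<and> x \<noteq> z"
proof -
  obtain x where x: "x \<in> D" using assms by fastforce
  have "card (D - {x}) \<ge> 2" using assms x by (simp add: card_Diff_singleton)
  then have "D - {x} \<noteq> {}" by (metis card.empty not_numeral_le_zero)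
  then obtain y where y: "y \<in> D - {x}" by blast
  have "card (D - {x} - {y}) \<ge> 1" using assms x y by (simp add: card_Diff_singleton)
  then have "D - {x} - {y} \<noteq> {}" by (metis card.empty not_one_le_zero)
  then obtain z where z: "z \<in> D - {x} - {y}" by blast
  show ?thesis using x y z by blast
qed

locale GG =
  fixes V :: "nat set" and E :: "nat set set" and r :: nat
  assumes finV: "finite V"
    and edgeE: "\<And>e. e \<in> E \<Longrightarrow> e \<subseteq> V \<and> card e = 2"
    and degB: "\<And>v. v \<in> V \<Longrightarrow> card {u \<in> V. {u,v} \<in> E} \<le> r + 1"
    and clqB: "\<And>S. S \<subseteq> V \<Longrightarrow> (\<forall>u\<in>S. \<forall>w\<in>S. u \<noteq> w \<longrightarrow> {u,w} \<in> E) \<Longrightarrow> card S \<le> r"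
    and r5: "5 \<le> r"
begin

definition adj :: "nat \<Rightarrow> nat \<Rightarrow> bool" where "adj u w \<longleftrightarrow> {u,w} \<in> E"
definition N :: "nat \<Rightarrow> nat set" where "N v = {u \<in> V. adj u v}"
definition clq :: "nat set \<Rightarrow> bool" where "clq S \<longleftrightarrow> S \<subseteq> V \<and> (\<forall>u\<in>S. \<forall>w\<in>S. u \<noteq> w \<longrightarrow> adj u w)"
definition kk :: "nat \<Rightarrow> nat" where "kk v = card {Q. clq Q \<and> card Q = r - 1 \<and> v \<in> Q}"
definition NI :: "nat \<Rightarrow> nat set" where "NI v = {u \<in> N v. \<exists>w \<in> N v. w \<noteq> u \<and> \<not> adj u w}"
definition Bv :: "nat \<Rightarrow> nat set" where "Bv v = insert v (N v - NI v)"
definition cov3 :: "nat \<Rightarrow> nat set set" where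
  "cov3 v = {T. T \<subseteq> N v \<and> card T = 3 \<and> (\<forall>p\<in>N v. \<forall>q\<in>N v. p \<noteq> q \<and> \<not> adj p q \<longrightarrow> p \<in> T \<or> q \<in> T)}"
definition cov2 :: "nat \<Rightarrow> nat set set" where
  "cov2 v = {T. T \<subseteq> N v \<and> card T = 2 \<and> (\<forall>p\<in>N v. \<forall>q\<in>N v. p \<noteq> q \<and> \<not> adj p q \<longrightarrow> p \<in> T \<or> q \<in> T)}"
definition CC :: real where "CC = 4 * (real r - 1)^2 / (real r + 2)"

lemma adj_sym: "adj u w = adj w u"
  unfolding adj_def by (simp add: insert_commute)

lemma adj_ne: "adj u w \<Longrightarrow> u \<noteq> w"
  unfolding adj_def using edgeE by fastforce

lemma adj_V: "adj u w \<Longrightarrow> u \<in> V \<and> w \<in> V"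
  unfolding adj_def using edgeE by blast

lemma N_sub: "N v \<subseteq> V" unfolding N_def by auto
lemma fin_N: "finite (N v)" using N_sub finV finite_subset by blast
lemma notin_N: "v \<notin> N v" unfolding N_def using adj_ne by auto
lemma in_N: "u \<in> N v \<longleftrightarrow> adj u v" unfolding N_def using adj_V by auto

lemma card_N: "card (N v) \<le> r + 1"
proof (cases "v \<in> V")
  case True
  have "N v = {u \<in> V. {u,v} \<in> E}" unfolding N_def adj_def by simp
  then show ?thesis using degB[OF True] by simp
next
  case False
  then have "N v = {}" unfolding N_def using adj_V by auto
  then show ?thesis by simp
qed

lemma clq_card: "clq S \<Longrightarrow> card S \<le> r"
  unfolding clq_def adj_def using clqB by blast

lemma nonclique:
  assumes "A \<subseteq> N v" "card A \<ge> r"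
  shows "\<exists>p\<in>A. \<exists>q\<in>A. p \<noteq> q \<and> \<not> adj p q"
proof (rule ccontr)
  assume "\<not> ?thesis"
  then have h: "\<forall>p\<in>A. \<forall>q\<in>A. p \<noteq> q \<longrightarrow> adj p q" by blast
  have fA: "finite A" using assms(1) fin_N finite_subset by blast
  have "A \<noteq> {}" using assms r5 by auto
  then obtain a where "a \<in> A" by blast
  then have vV: "v \<in> V" using assms(1) in_N adj_V by blast
  have "clq (insert v A)" unfolding clq_def
    using h assms(1) N_sub vV in_N adj_sym by blast
  then have "card (insert v A) \<le> r" by (rule clq_card)
  moreover have "v \<notin> A" using assms(1) notin_N by blast
  ultimately show False using fA assms(2) by simp
qed

lemma kk_le_cl:
  "kk v \<le> card {S. S \<subseteq> N v \<and> clq S \<and> card S = r - 2}"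
proof -
  let ?Q = "{Q. clq Q \<and> card Q = r - 1 \<and> v \<in> Q}"
  let ?S = "{S. S \<subseteq> N v \<and> clq S \<and> card S = r - 2}"
  have inj: "inj_on (\<lambda>Q. Q - {v}) ?Q"
    by (rule inj_onI) (metis (mono_tags, lifting) insert_Diff mem_Collect_eq)
  have img: "(\<lambda>Q. Q - {v}) ` ?Q \<subseteq> ?S"
  proof
    fix S assume "S \<in> (\<lambda>Q. Q - {v}) ` ?Q"
    then obtain Q where Q: "clq Q" "card Q = r - 1" "v \<in> Q" "S = Q - {v}" by blast
    have fQ: "finite Q" using Q(1) finV unfolding clq_def using finite_subset by blast
    have "S \<subseteq> N v" using Q unfolding clq_def N_def by auto
    moreover have "clq S" using Q(1,4) unfolding clq_def by auto
    moreover have "card S = r - 2" using Q fQ by simp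
    ultimately show "S \<in> ?S" by blast
  qed
  have fS: "finite ?S" by (rule finite_subset[of _ "Pow (N v)"]) (auto simp: fin_N)
  have "kk v = card ((\<lambda>Q. Q - {v}) ` ?Q)" unfolding kk_def using card_image[OF inj] by simp
  also have "\<dots> \<le> card ?S" using img fS by (rule card_mono[rotated])
  finally show ?thesis .
qed

lemma cl_cov3:
  assumes "card (N v) = r + 1"
  shows "card {S. S \<subseteq> N v \<and> clq S \<and> card S = r - 2} \<le> card (cov3 v)"
proof -
  let ?S = "{S. S \<subseteq> N v \<and> clq S \<and> card S = r - 2}"
  have inj: "inj_on (\<lambda>S. N v - S) ?S"
    by (rule inj_onI) (metis (no_types, lifting) Diff_Diff_Int inf.absorb_iff2 mem_Collect_eq)
  have img: "(\<lambda>S. N v - S) ` ?S \<subseteq> cov3 v"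
  proof
    fix T assume "T \<in> (\<lambda>S. N v - S) ` ?S"
    then obtain S where S: "S \<subseteq> N v" "clq S" "card S = r - 2" "T = N v - S" by blast
    have "card T = card (N v) - card S" using S fin_N[of v] by (simp add: card_Diff_subset finite_subset)
    then have "card T = 3" using S assms r5 by simp
    moreover have "\<forall>p\<in>N v. \<forall>q\<in>N v. p \<noteq> q \<and> \<not> adj p q \<longrightarrow> p \<in> T \<or> q \<in> T"
      using S(2,4) unfolding clq_def by blast
    ultimately show "T \<in> cov3 v" unfolding cov3_def using S(4) by blast
  qed
  have fS: "finite (cov3 v)" unfolding cov3_def by (rule finite_subset[of _ "Pow (N v)"]) (auto simp: fin_N)
  have "card ?S = card ((\<lambda>S. N v - S) ` ?S)" using card_image[OF inj] by simp
  also have "\<dots> \<le> card (cov3 v)" using img fS by (rule card_mono[rotated])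
  finally show ?thesis .
qed

lemma cl_cov2:
  assumes "card (N v) = r"
  shows "card {S. S \<subseteq> N v \<and> clq S \<and> card S = r - 2} \<le> card (cov2 v)"
proof -
  let ?S = "{S. S \<subseteq> N v \<and> clq S \<and> card S = r - 2}"
  have inj: "inj_on (\<lambda>S. N v - S) ?S"
    by (rule inj_onI) (metis (no_types, lifting) Diff_Diff_Int inf.absorb_iff2 mem_Collect_eq)
  have img: "(\<lambda>S. N v - S) ` ?S \<subseteq> cov2 v"
  proof
    fix T assume "T \<in> (\<lambda>S. N v - S) ` ?S"
    then obtain S where S: "S \<subseteq> N v" "clq S" "card S = r - 2" "T = N v - S" by blast
    have "card T = card (N v) - card S" using S fin_N[of v] by (simp add: card_Diff_subset finite_subset)
    then have "card T = 2" using S assms r5 by simp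
    moreover have "\<forall>p\<in>N v. \<forall>q\<in>N v. p \<noteq> q \<and> \<not> adj p q \<longrightarrow> p \<in> T \<or> q \<in> T"
      using S(2,4) unfolding clq_def by blast
    ultimately show "T \<in> cov2 v" unfolding cov2_def using S(4) by blast
  qed
  have fS: "finite (cov2 v)" unfolding cov2_def by (rule finite_subset[of _ "Pow (N v)"]) (auto simp: fin_N)
  have "card ?S = card ((\<lambda>S. N v - S) ` ?S)" using card_image[OF inj] by simp
  also have "\<dots> \<le> card (cov2 v)" using img fS by (rule card_mono[rotated])
  finally show ?thesis .
qed

lemma kk_cov3: "card (N v) = r + 1 \<Longrightarrow> kk v \<le> card (cov3 v)"
  using kk_le_cl cl_cov3 le_trans by blast

lemma kk_via:
  assumes "card (N v) = r + 1" "\<And>T. T \<in> cov3 v \<Longrightarrow> P T"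
  shows "kk v \<le> card {T. T \<subseteq> N v \<and> card T = 3 \<and> P T}"
proof -
  have "cov3 v \<subseteq> {T. T \<subseteq> N v \<and> card T = 3 \<and> P T}" using assms(2) unfolding cov3_def by blast
  then have "card (cov3 v) \<le> card {T. T \<subseteq> N v \<and> card T = 3 \<and> P T}"
    by (intro card_mono) (auto intro: fin_fam fin_N)
  then show ?thesis using kk_cov3[OF assms(1)] by linarith
qed

lemma hit: "T \<in> cov3 v \<Longrightarrow> p \<in> N v \<Longrightarrow> q \<in> N v \<Longrightarrow> p \<noteq> q \<Longrightarrow> \<not> adj p q \<Longrightarrow> p \<in> T \<or> q \<in> T"
  unfolding cov3_def by blast

lemma kk_deg_r:
  assumes "card (N v) = r"
  shows "kk v \<le> 2 * r - 3"
proof -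
  obtain p q where pq: "p \<in> N v" "q \<in> N v" "p \<noteq> q" "\<not> adj p q"
    using nonclique[of "N v" v] assms by auto
  have "cov2 v \<subseteq> {T. T \<subseteq> N v \<and> card T = 2 \<and> (p \<in> T \<or> q \<in> T)}"
    using pq unfolding cov2_def by blast
  then have "card (cov2 v) \<le> card {T. T \<subseteq> N v \<and> card T = 2 \<and> (p \<in> T \<or> q \<in> T)}"
    by (intro card_mono) (auto intro: fin_fam fin_N)
  also have "\<dots> \<le> 2 * card (N v) - 3" by (rule K7[OF fin_N pq(1-3)])
  finally show ?thesis using kk_le_cl[of v] cl_cov2[OF assms] assms by linarith
qed

lemma kk_small:
  assumes "card (N v) \<le> r - 1"
  shows "kk v \<le> r - 1"
proof -
  have "card {S. S \<subseteq> N v \<and> clq S \<and> card S = r - 2} \<le> card {S. S \<subseteq> N v \<and> card S = r - 2}"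
    by (intro card_mono) (auto intro: fin_fam fin_N)
  also have "\<dots> = card (N v) choose (r - 2)" by (rule n_subsets[OF fin_N])
  also have "\<dots> \<le> (r - 1) choose (r - 2)" by (rule binomial_right_mono[OF assms])
  also have "(r - 1) choose (r - 2) = r - 1"
  proof -
    have "r - 1 = Suc (r - 2)" using r5 by simp
    then show ?thesis by (metis binomial_Suc_n)
  qed
  finally show ?thesis using kk_le_cl[of v] by linarith
qed

lemma kk_V: "v \<notin> V \<Longrightarrow> kk v = 0"
proof -
  assume "v \<notin> V"
  then have "{Q. clq Q \<and> card Q = r - 1 \<and> v \<in> Q} = {}" unfolding clq_def by auto
  then show "kk v = 0" unfolding kk_def by (simp only: card.empty)
qed

lemma CC_facts: "real (2 * r - 1) \<le> CC" "8 \<le> CC"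
proof -
  have r: "real r \<ge> 5" using r5 by simp
  have "real (2 * r - 1) = 2 * real r - 1" using r5 by simp
  moreover have "(2 * real r - 1) * (real r + 2) \<le> 4 * (real r - 1)^2"
  proof -
    have "(2 * real r - 1) * (real r - 5) \<ge> 0" using r by simp
    then show ?thesis by (simp add: power2_eq_square algebra_simps)
  qed
  ultimately show "real (2 * r - 1) \<le> CC" unfolding CC_def using r by (simp add: field_simps)
  have "8 * (real r + 2) \<le> 4 * (real r - 1)^2"
  proof -
    have "real r * (real r - 5) \<ge> 0" using r by simp
    moreover have "4 * (real r - 1)^2 - 8 * (real r + 2) = 4 * (real r * (real r - 5)) + 4*(real r - 3)"
      by (simp add: power2_eq_square algebra_simps)
    ultimately show ?thesis using r by argo
  qed
  then show "8 \<le> CC" unfolding CC_def using r by (simp add: field_simps)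
qed

lemma low_deg:
  assumes "card (N v) \<le> r"
  shows "real (kk v) \<le> CC" "kk v \<le> 2 * r - 3"
proof -
  show "kk v \<le> 2 * r - 3"
  proof (cases "card (N v) = r")
    case True then show ?thesis using kk_deg_r by blast
  next
    case False then have "card (N v) \<le> r - 1" using assms by simp
    then show ?thesis using kk_small r5 by fastforce
  qed
  then have "real (kk v) \<le> real (2 * r - 1)" by simp
  then show "real (kk v) \<le> CC" using CC_facts(1) by linarith
qed

definition high :: "nat \<Rightarrow> bool" where "high v \<longleftrightarrow> real (kk v) > CC"

lemma high_deg: "high v \<Longrightarrow> card (N v) = r + 1 \<and> v \<in> V"
proof -
  assume h: "high v"
  have "v \<in> V" using h kk_V CC_facts(2) unfolding high_def by force
  moreover have "card (N v) = r + 1"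
  proof (rule ccontr)
    assume "card (N v) \<noteq> r + 1"
    then have "card (N v) \<le> r" using card_N[of v] by simp
    then show False using low_deg(1)[of v] h unfolding high_def by simp
  qed
  ultimately show ?thesis by simp
qed

lemma high_Hdeg:
  assumes h: "high v" and x: "x \<in> N v" and y: "y1 \<in> N v" "y2 \<in> N v" "y3 \<in> N v"
    and ne: "y1 \<noteq> y2" "y1 \<noteq> y3" "y2 \<noteq> y3"
    and na: "\<not> adj x y1" "\<not> adj x y2" "\<not> adj x y3"
    and xy: "x \<noteq> y1" "x \<noteq> y2" "x \<noteq> y3"
  shows False
proof -
  have c: "card (N v) = r + 1" using high_deg[OF h] by simp
  have "card (N v - {x}) \<ge> r" using c x fin_N by (simp add: card_Diff_singleton)
  then obtain p q where pq: "p \<in> N v - {x}" "q \<in> N v - {x}" "p \<noteq> q" "\<not> adj p q"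
    using nonclique[of "N v - {x}" v] by blast
  have "kk v \<le> card {T. T \<subseteq> N v \<and> card T = 3 \<and> (x \<in> T \<or> y1 \<in> T) \<and> (x \<in> T \<or> y2 \<in> T) \<and> (x \<in> T \<or> y3 \<in> T) \<and> (p \<in> T \<or> q \<in> T)}"
  proof (rule kk_via[OF c])
    fix T assume T: "T \<in> cov3 v"
    show "(x \<in> T \<or> y1 \<in> T) \<and> (x \<in> T \<or> y2 \<in> T) \<and> (x \<in> T \<or> y3 \<in> T) \<and> (p \<in> T \<or> q \<in> T)"
      using hit[OF T x y(1) xy(1) na(1)] hit[OF T x y(2) xy(2) na(2)] hit[OF T x y(3) xy(3) na(3)]
        hit[OF T _ _ pq(3) pq(4)] pq(1,2) by blast
  qed
  also have "\<dots> \<le> 2 * card (N v) - 4"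
    by (rule K6[OF fin_N x]) (use pq ne in auto)
  finally have "kk v \<le> 2 * r - 2" using c by simp
  then have "real (kk v) \<le> real (2 * r - 1)" by simp
  then show False using h CC_facts(1) unfolding high_def by linarith
qed

lemma high_Hdeg2:
  assumes h: "high v" and x: "x \<in> N v"
  shows "card {y \<in> N v. y \<noteq> x \<and> \<not> adj x y} \<le> 2"
proof (rule ccontr)
  assume "\<not> ?thesis"
  then have "card {y \<in> N v. y \<noteq> x \<and> \<not> adj x y} \<ge> 3" by simp
  then obtain y1 y2 y3 where "y1 \<in> {y \<in> N v. y \<noteq> x \<and> \<not> adj x y}" "y2 \<in> {y \<in> N v. y \<noteq> x \<and> \<not> adj x y}"
     "y3 \<in> {y \<in> N v. y \<noteq> x \<and> \<not> adj x y}" "y1 \<noteq> y2" "y2 \<noteq> y3" "y1 \<noteq> y3"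
    using three_elems[of "{y \<in> N v. y \<noteq> x \<and> \<not> adj x y}"] fin_N by auto
  then show False using high_Hdeg[OF h x, of y1 y2 y3] by auto
qed

lemma not_high_K4:
  assumes h: "high v" and m: "a \<in> N v" "b \<in> N v" "c \<in> N v" "d \<in> N v" "e \<in> N v"
    and ne: "a \<noteq> b" "a \<noteq> c" "a \<noteq> d" "a \<noteq> e" "b \<noteq> c" "b \<noteq> d" "b \<noteq> e" "c \<noteq> d" "c \<noteq> e" "d \<noteq> e"
    and na: "\<not> adj a b" "\<not> adj a e" "\<not> adj c d"
  shows False
proof -
  have c: "card (N v) = r + 1" using high_deg[OF h] by simp
  have "kk v \<le> card {T. T \<subseteq> N v \<and> card T = 3 \<and> (a \<in> T \<or> b \<in> T) \<and> (a \<in> T \<or> e \<in> T) \<and> (c \<in> T \<or> d \<in> T)}"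
  proof (rule kk_via[OF c])
    fix T assume T: "T \<in> cov3 v"
    show "(a \<in> T \<or> b \<in> T) \<and> (a \<in> T \<or> e \<in> T) \<and> (c \<in> T \<or> d \<in> T)"
      using hit[OF T m(1) m(2) ne(1) na(1)] hit[OF T m(1) m(5) ne(4) na(2)] hit[OF T m(3) m(4) ne(8) na(3)] by blast
  qed
  also have "\<dots> \<le> 2 * card (N v) - 3" by (rule K4[OF fin_N m ne])
  finally have "kk v \<le> 2 * r - 1" using c by simp
  then have "real (kk v) \<le> real (2 * r - 1)" by simp
  then show False using h CC_facts(1) unfolding high_def by linarith
qed

lemma not_high_K5:
  assumes h: "high v" and m: "a \<in> N v" "b \<in> N v" "c \<in> N v" "d \<in> N v" "e \<in> N v" "f \<in> N v"
    and ne: "a \<noteq> b" "c \<noteq> d" "e \<noteq> f" "a \<noteq> c" "a \<noteq> d" "a \<noteq> e" "a \<noteq> f" "b \<noteq> c" "b \<noteq> d" "b \<noteq> e" "b \<noteq> f"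
    "c \<noteq> e" "c \<noteq> f" "d \<noteq> e" "d \<noteq> f"
    and na: "\<not> adj a b" "\<not> adj c d" "\<not> adj e f"
  shows False
proof -
  have c: "card (N v) = r + 1" using high_deg[OF h] by simp
  have "kk v \<le> card {T. T \<subseteq> N v \<and> card T = 3 \<and> (a \<in> T \<or> b \<in> T) \<and> (c \<in> T \<or> d \<in> T) \<and> (e \<in> T \<or> f \<in> T)}"
  proof (rule kk_via[OF c])
    fix T assume T: "T \<in> cov3 v"
    show "(a \<in> T \<or> b \<in> T) \<and> (c \<in> T \<or> d \<in> T) \<and> (e \<in> T \<or> f \<in> T)"
      using hit[OF T m(1) m(2) ne(1) na(1)] hit[OF T m(3) m(4) ne(2) na(2)] hit[OF T m(5) m(6) ne(3) na(3)] by blast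
  qed
  also have "\<dots> \<le> 8" by (rule K5) (use ne in auto)
  finally have "real (kk v) \<le> 8" by simp
  then show False using h CC_facts(2) unfolding high_def by linarith
qed

definition quad :: "nat \<Rightarrow> nat \<Rightarrow> nat \<Rightarrow> nat \<Rightarrow> nat \<Rightarrow> bool" where
  "quad v a b c d \<longleftrightarrow> a \<in> N v \<and> b \<in> N v \<and> c \<in> N v \<and> d \<in> N v \<and>
     a \<noteq> b \<and> a \<noteq> c \<and> a \<noteq> d \<and> b \<noteq> c \<and> b \<noteq> d \<and> c \<noteq> d \<and> \<not> adj a b \<and> \<not> adj c d"

lemma quad_NI:
  assumes h: "high v" and q: "quad v a b c d"
  shows "NI v = {a,b,c,d}"
proof
  have q': "a \<in> N v" "b \<in> N v" "c \<in> N v" "d \<in> N v" "a \<noteq> b" "a \<noteq> c" "a \<noteq> d" "b \<noteq> c" "b \<noteq> d" "c \<noteq> d"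
     "\<not> adj a b" "\<not> adj c d" using q unfolding quad_def by auto
  have sy: "\<not> adj b a" "\<not> adj d c" using q'(11,12) adj_sym by auto
  then show "{a,b,c,d} \<subseteq> NI v" unfolding NI_def using q' by auto
  show "NI v \<subseteq> {a,b,c,d}"
  proof
    fix u assume "u \<in> NI v"
    then obtain w where u: "u \<in> N v" and w: "w \<in> N v" "w \<noteq> u" "\<not> adj u w" unfolding NI_def by blast
    show "u \<in> {a,b,c,d}"
    proof (rule ccontr)
      assume nu: "u \<notin> {a,b,c,d}"
      show False
      proof (cases "w \<in> {a,b,c,d}")
        case False
        then show False using not_high_K5[OF h q'(1-4) u w(1)] q'(5-12) nu w(2,3) by fastforce
      next
        case True
        then consider "w = a" | "w = b" | "w = c" | "w = d" by blast
        then show False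
        proof cases
          case 1
          have "\<not> adj w u" using w(3) adj_sym by simp
          then show False using not_high_K4[OF h q'(1,2,3,4) u] q'(5-12) nu w(2) 1 sy by fastforce
        next
          case 2
          have "\<not> adj w u" using w(3) adj_sym by simp
          then show False using not_high_K4[OF h q'(2,1,3,4) u] q'(5-12) nu w(2) 2 sy by fastforce
        next
          case 3
          have "\<not> adj w u" using w(3) adj_sym by simp
          then show False using not_high_K4[OF h q'(3,4,1,2) u] q'(5-12) nu w(2) 3 sy by fastforce
        next
          case 4
          have "\<not> adj w u" using w(3) adj_sym by simp
          then show False using not_high_K4[OF h q'(4,3,1,2) u] q'(5-12) nu w(2) 4 sy by fastforce
        qed
      qed
    qed
  qed
qed


lemma tri_case:
  assumes h: "high v" and nq: "\<not> (\<exists>a b c d. quad v a b c d)"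
  shows "\<exists>a b c. a \<in> N v \<and> b \<in> N v \<and> c \<in> N v \<and> a \<noteq> b \<and> a \<noteq> c \<and> b \<noteq> c \<and>
     \<not> adj a b \<and> \<not> adj b c \<and> \<not> adj a c \<and> NI v = {a,b,c}"
proof -
  have c: "card (N v) = r + 1" using high_deg[OF h] by simp
  obtain p q where pq: "p \<in> N v" "q \<in> N v" "p \<noteq> q" "\<not> adj p q"
    using nonclique[of "N v" v] c by auto
  have "card (N v - {p}) \<ge> r" using c pq fin_N by (simp add: card_Diff_singleton)
  then obtain p2 q2 where pq2: "p2 \<in> N v - {p}" "q2 \<in> N v - {p}" "p2 \<noteq> q2" "\<not> adj p2 q2"
    using nonclique[of "N v - {p}" v] by blast
  have nq': "\<And>a b c d. a \<in> N v \<Longrightarrow> b \<in> N v \<Longrightarrow> c \<in> N v \<Longrightarrow> d \<in> N v \<Longrightarrow>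
     a \<noteq> b \<Longrightarrow> a \<noteq> c \<Longrightarrow> a \<noteq> d \<Longrightarrow> b \<noteq> c \<Longrightarrow> b \<noteq> d \<Longrightarrow> c \<noteq> d \<Longrightarrow> \<not> adj a b \<Longrightarrow> \<not> adj c d \<Longrightarrow> False"
    using nq unfolding quad_def by blast
  obtain t where t: "t \<in> N v" "t \<noteq> p" "t \<noteq> q" "\<not> adj q t"
  proof (cases "p2 = q")
    case True then show ?thesis using that pq2 adj_sym by blast
  next
    case False
    have "q2 = q"
    proof (rule ccontr)
      assume "q2 \<noteq> q"
      then show False using nq'[of p q p2 q2] pq pq2 False by blast
    qed
    then show ?thesis using that pq2 adj_sym False by blast
  qed
  have "card (N v - {q}) \<ge> r" using c pq fin_N by (simp add: card_Diff_singleton)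
  then obtain p3 q3 where pq3: "p3 \<in> N v - {q}" "q3 \<in> N v - {q}" "p3 \<noteq> q3" "\<not> adj p3 q3"
    using nonclique[of "N v - {q}" v] by blast
  obtain s where s: "s \<in> N v" "s \<noteq> p" "s \<noteq> q" "\<not> adj p s"
  proof (cases "p3 = p")
    case True then show ?thesis using that pq3 adj_sym by blast
  next
    case False
    have "q3 = p"
    proof (rule ccontr)
      assume "q3 \<noteq> p"
      then show False using nq'[of p q p3 q3] pq pq3 False by blast
    qed
    then show ?thesis using that pq3 adj_sym False by blast
  qed
  have st: "s = t"
  proof (rule ccontr)
    assume "s \<noteq> t"
    then show False using nq'[of p s q t] pq s t by blast
  qed
  have pt: "\<not> adj p t" using s st by simp
  have sy: "\<not> adj q p" "\<not> adj t q" "\<not> adj t p" using pq t pt adj_sym by auto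
  have "NI v = {p,q,t}"
  proof
    show "{p,q,t} \<subseteq> NI v" unfolding NI_def using pq t pt sy by auto
    show "NI v \<subseteq> {p,q,t}"
    proof
      fix u assume "u \<in> NI v"
      then obtain w where u: "u \<in> N v" and w: "w \<in> N v" "w \<noteq> u" "\<not> adj u w" unfolding NI_def by blast
      show "u \<in> {p,q,t}"
      proof (rule ccontr)
        assume nu: "u \<notin> {p,q,t}"
        have "w \<in> {p,q}"
        proof (rule ccontr)
          assume "w \<notin> {p,q}"
          then show False using nq'[of u w p q] u w pq nu by auto
        qed
        then show False
        proof
          assume "w = p"
          then show False using nq'[of u w q t] u w pq t nu by auto
        next
          assume "w \<in> {q}"
          then have "w = q" by simp
          then show False using nq'[of u w p t] u w pq t pt nu by auto
        qed
      qed
    qed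
  qed
  then show ?thesis using pq t pt by blast
qed

lemma high_cases:
  assumes h: "high v"
  shows "(\<exists>a b c d. quad v a b c d \<and> NI v = {a,b,c,d}) \<or>
    (\<exists>a b c. a \<in> N v \<and> b \<in> N v \<and> c \<in> N v \<and> a \<noteq> b \<and> a \<noteq> c \<and> b \<noteq> c \<and>
     \<not> adj a b \<and> \<not> adj b c \<and> \<not> adj a c \<and> NI v = {a,b,c})"
  using quad_NI[OF h] tri_case[OF h] by blast

lemma card_NI: assumes h: "high v" shows "card (NI v) = 3 \<or> card (NI v) = 4"
  using high_cases[OF h] unfolding quad_def by auto

lemma NI_sub: "NI v \<subseteq> N v" unfolding NI_def by auto

lemma notNI_adj: "s \<in> N v \<Longrightarrow> s \<notin> NI v \<Longrightarrow> t \<in> N v \<Longrightarrow> t \<noteq> s \<Longrightarrow> adj s t"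
  unfolding NI_def by blast

lemma B_N:
  assumes h: "high v" and w: "w \<in> Bv v"
  shows "N w = insert v (N v) - {w}"
proof (cases "w = v")
  case True then show ?thesis using notin_N by auto
next
  case False
  then have w': "w \<in> N v" "w \<notin> NI v" using w unfolding Bv_def by auto
  have c: "card (N v) = r + 1" using high_deg[OF h] by simp
  have sub: "insert v (N v) - {w} \<subseteq> N w"
  proof
    fix t assume t: "t \<in> insert v (N v) - {w}"
    show "t \<in> N w"
    proof (cases "t = v")
      case True then show ?thesis using w'(1) in_N adj_sym by simp
    next
      case False then have "t \<in> N v" "t \<noteq> w" using t by auto
      then show ?thesis using notNI_adj[OF w'(1) w'(2)] in_N adj_sym by simp
    qed
  qed
  have "card (insert v (N v) - {w}) = r + 1" using c w'(1) notin_N[of v] fin_N by (simp add: card_Diff_singleton)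
  then have "card (N w) \<le> card (insert v (N v) - {w})" using card_N[of w] by simp
  then show ?thesis using card_seteq[OF fin_N sub] by simp
qed

lemma B_NI:
  assumes h: "high v" and w: "w \<in> Bv v"
  shows "NI w = NI v"
proof -
  have Nw: "N w = insert v (N v) - {w}" by (rule B_N[OF h w])
  have wNI: "w \<notin> NI v" using w notin_N NI_sub unfolding Bv_def by blast
  show ?thesis
  proof
    show "NI w \<subseteq> NI v"
    proof
      fix u assume u: "u \<in> NI w"
      then obtain x where x: "x \<in> N w" "x \<noteq> u" "\<not> adj u x" and uN: "u \<in> N w" unfolding NI_def by blast
      have "u \<noteq> v"
      proof
        assume "u = v"
        then have "x \<in> N v" using x Nw by auto
        then have "adj x v" using in_N by simp
        then have "adj v x" using adj_sym by simp
        then show False using x(3) \<open>u = v\<close> by simp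
      qed
      then have uNv: "u \<in> N v" using uN Nw by auto
      have "u \<in> NI v"
      proof (rule ccontr)
        assume "u \<notin> NI v"
        have "x \<noteq> v" using uNv x in_N by auto
        then have "x \<in> N v" using x Nw by auto
        then show False using notNI_adj[OF uNv \<open>u \<notin> NI v\<close>] x by auto
      qed
      then show "u \<in> NI v" .
    qed
    show "NI v \<subseteq> NI w"
    proof
      fix u assume u: "u \<in> NI v"
      then obtain x where x: "x \<in> N v" "x \<noteq> u" "\<not> adj u x" and uN: "u \<in> N v" unfolding NI_def by blast
      have "\<not> adj x u" using x(3) adj_sym by simp
      then have "x \<in> NI v" unfolding NI_def using x(1,2) uN by auto
      then have "x \<noteq> w" using wNI by auto
      then have "x \<in> N w" using x Nw by auto
      moreover have "u \<in> N w" using uN Nw u wNI by auto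
      ultimately show "u \<in> NI w" unfolding NI_def using x by blast
    qed
  qed
qed

lemma B_card:
  assumes h: "high v"
  shows "card (Bv v) + card (NI v) = r + 2"
proof -
  have c: "card (N v) = r + 1" using high_deg[OF h] by simp
  have fNI: "finite (NI v)" using finite_subset[OF NI_sub[of v] fin_N[of v]] .
  have "card (N v - NI v) = card (N v) - card (NI v)" using card_Diff_subset[OF fNI NI_sub[of v]] .
  then have "card (N v - NI v) = r + 1 - card (NI v)" using c by simp
  moreover have "card (NI v) \<le> r + 1" using c card_mono[OF fin_N[of v] NI_sub[of v]] by simp
  moreover have "card (Bv v) = card (N v - NI v) + 1" unfolding Bv_def using notin_N fin_N by simp
  ultimately show ?thesis by simp
qed

lemma B_ge3: assumes h: "high v" shows "card (Bv v) \<ge> 3"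
  using B_card[OF h] card_NI[OF h] r5 by auto

lemma fin_B: "finite (Bv v)" unfolding Bv_def using fin_N by simp

lemma B_NI_disj: "Bv v \<inter> NI v = {}"
  unfolding Bv_def using notin_N NI_sub by blast

lemma B_sub_Nu:
  assumes u: "u \<in> NI v"
  shows "Bv v \<subseteq> N u"
proof
  fix y assume y: "y \<in> Bv v"
  have uN: "u \<in> N v" using u NI_sub by blast
  show "y \<in> N u"
  proof (cases "y = v")
    case True
    have "adj u v" using uN in_N by simp
    then have "adj v u" using adj_sym by simp
    then show ?thesis using True in_N by simp
  next
    case False
    then have "y \<in> N v" "y \<notin> NI v" using y unfolding Bv_def by auto
    moreover have "u \<noteq> y" using u \<open>y \<notin> NI v\<close> by auto
    ultimately show ?thesis using notNI_adj uN in_N by blast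
  qed
qed

lemma B_out:
  assumes h: "high v" and x: "x \<notin> insert v (N v)" and y: "y \<in> Bv v"
  shows "\<not> adj x y"
proof
  assume a: "adj x y"
  have "x \<in> N y" using a in_N by simp
  then show False using B_N[OF h y] x by auto
qed


end

context GG begin

lemma recv_z:
  assumes h: "high v" and u: "u \<in> NI v" and cu: "card (N u) = r + 1"
  shows "\<exists>z. z \<in> N u \<and> z \<notin> insert v (N v)"
proof (rule ccontr)
  assume "\<not> ?thesis"
  then have sub: "N u \<subseteq> insert v (N v)" by blast
  obtain y where y: "y \<in> N v" "y \<noteq> u" "\<not> adj u y" and uN: "u \<in> N v" using u unfolding NI_def by blast
  have "y \<notin> N u" using y(3) in_N adj_sym by simp
  then have "N u \<subseteq> insert v (N v) - {u, y}" using sub notin_N[of u] by blast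
  then have "card (N u) \<le> card (insert v (N v) - {u, y})" using fin_N by (intro card_mono) auto
  also have "card (insert v (N v) - {u, y}) = card (insert v (N v)) - 2"
    using uN y fin_N by (subst card_Diff_subset) auto
  also have "card (insert v (N v)) = r + 2" using high_deg[OF h] notin_N[of v] fin_N by simp
  finally show False using cu by simp
qed

lemma recv_kk_gen:
  assumes h: "high v" and u: "u \<in> NI v"
  shows "kk u \<le> 2 * r - 2"
proof (cases "card (N u) \<le> r")
  case True then show ?thesis using low_deg(2)[of u] by simp
next
  case False
  then have cu: "card (N u) = r + 1" using card_N[of u] by simp
  obtain z where z: "z \<in> N u" "z \<notin> insert v (N v)" using recv_z[OF h u cu] by blast
  obtain y1 y2 y3 where y: "y1 \<in> Bv v" "y2 \<in> Bv v" "y3 \<in> Bv v" "y1 \<noteq> y2" "y2 \<noteq> y3" "y1 \<noteq> y3"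
    using three_elems[OF fin_B B_ge3[OF h]] by blast
  have yN: "y1 \<in> N u" "y2 \<in> N u" "y3 \<in> N u" using B_sub_Nu[OF u] y by auto
  have na: "\<not> adj z y1" "\<not> adj z y2" "\<not> adj z y3" using B_out[OF h z(2)] y by auto
  have zy: "z \<noteq> y1" "z \<noteq> y2" "z \<noteq> y3" using z(2) y unfolding Bv_def by auto
  have "card (N u - {z}) \<ge> r" using cu z fin_N by (simp add: card_Diff_singleton)
  then obtain p q where pq: "p \<in> N u - {z}" "q \<in> N u - {z}" "p \<noteq> q" "\<not> adj p q"
    using nonclique[of "N u - {z}" u] by blast
  have "kk u \<le> card {T. T \<subseteq> N u \<and> card T = 3 \<and> (z \<in> T \<or> y1 \<in> T) \<and> (z \<in> T \<or> y2 \<in> T) \<and> (z \<in> T \<or> y3 \<in> T) \<and> (p \<in> T \<or> q \<in> T)}"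
  proof (rule kk_via[OF cu])
    fix T assume T: "T \<in> cov3 u"
    show "(z \<in> T \<or> y1 \<in> T) \<and> (z \<in> T \<or> y2 \<in> T) \<and> (z \<in> T \<or> y3 \<in> T) \<and> (p \<in> T \<or> q \<in> T)"
      using hit[OF T z(1) yN(1) zy(1) na(1)] hit[OF T z(1) yN(2) zy(2) na(2)] hit[OF T z(1) yN(3) zy(3) na(3)]
        hit[OF T _ _ pq(3) pq(4)] pq(1,2) by blast
  qed
  also have "\<dots> \<le> 2 * card (N u) - 4"
    by (rule K6[OF fin_N z(1)]) (use pq y in auto)
  finally show ?thesis using cu by simp
qed

lemma recv_kk_ref:
  assumes h: "high v" and u: "u \<in> NI v" and p: "p \<in> N u" "p \<in> NI v" and q: "q \<in> N u" "q \<in> NI v"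
    and pq: "p \<noteq> q" "\<not> adj p q"
  shows "kk u \<le> 2 * r - 3"
proof (cases "card (N u) \<le> r")
  case True then show ?thesis using low_deg(2)[of u] by simp
next
  case False
  then have cu: "card (N u) = r + 1" using card_N[of u] by simp
  obtain z where z: "z \<in> N u" "z \<notin> insert v (N v)" using recv_z[OF h u cu] by blast
  obtain y1 y2 y3 where y: "y1 \<in> Bv v" "y2 \<in> Bv v" "y3 \<in> Bv v" "y1 \<noteq> y2" "y2 \<noteq> y3" "y1 \<noteq> y3"
    using three_elems[OF fin_B B_ge3[OF h]] by blast
  have yN: "y1 \<in> N u" "y2 \<in> N u" "y3 \<in> N u" using B_sub_Nu[OF u] y by auto
  have na: "\<not> adj z y1" "\<not> adj z y2" "\<not> adj z y3" using B_out[OF h z(2)] y by auto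
  have zy: "z \<noteq> y1" "z \<noteq> y2" "z \<noteq> y3" using z(2) y unfolding Bv_def by auto
  have pz: "p \<noteq> z" "q \<noteq> z" using z(2) p(2) q(2) NI_sub by auto
  have py: "p \<noteq> y1" "p \<noteq> y2" "p \<noteq> y3" "q \<noteq> y1" "q \<noteq> y2" "q \<noteq> y3"
    using B_NI_disj[of v] y p(2) q(2) by auto
  have "kk u \<le> card {T. T \<subseteq> N u \<and> card T = 3 \<and> (z \<in> T \<or> y1 \<in> T) \<and> (z \<in> T \<or> y2 \<in> T) \<and> (z \<in> T \<or> y3 \<in> T) \<and> (p \<in> T \<or> q \<in> T)}"
  proof (rule kk_via[OF cu])
    fix T assume T: "T \<in> cov3 u"
    show "(z \<in> T \<or> y1 \<in> T) \<and> (z \<in> T \<or> y2 \<in> T) \<and> (z \<in> T \<or> y3 \<in> T) \<and> (p \<in> T \<or> q \<in> T)"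
      using hit[OF T z(1) yN(1) zy(1) na(1)] hit[OF T z(1) yN(2) zy(2) na(2)] hit[OF T z(1) yN(3) zy(3) na(3)]
        hit[OF T p(1) q(1) pq(1) pq(2)] by blast
  qed
  also have "\<dots> \<le> 2 * card (N u) - 5"
    by (rule K6'[OF fin_N z(1) p(1) q(1) pq(1) pz]) (use py y in auto)
  finally show ?thesis using cu by simp
qed

lemma B_ge: assumes h: "high v" shows "card (Bv v) \<ge> r - 2"
  using B_card[OF h] card_NI[OF h] by auto

lemma senders:
  assumes h: "high v" and u: "u \<in> NI v" and hw: "high w" and uw: "u \<in> NI w"
  shows "w \<in> Bv v"
proof (rule ccontr)
  assume nB: "w \<notin> Bv v"
  have cw: "card (N w) = r + 1" using high_deg[OF hw] by simp
  have uNw: "u \<in> N w" using uw NI_sub by blast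
  then have "adj u w" using in_N by simp
  then have "adj w u" using adj_sym by simp
  then have wNu: "w \<in> N u" using in_N by simp
  obtain y1 y2 y3 where y: "y1 \<in> Bv v" "y2 \<in> Bv v" "y3 \<in> Bv v" "y1 \<noteq> y2" "y2 \<noteq> y3" "y1 \<noteq> y3"
    using three_elems[OF fin_B B_ge3[OF h]] by blast
  show False
  proof (cases "w \<in> insert v (N v)")
    case True
    then have wNI: "w \<in> NI v" using nB unfolding Bv_def by auto
    obtain z where z: "z \<in> N w" "z \<notin> insert v (N v)" using recv_z[OF h wNI cw] by blast
    have yN: "y1 \<in> N w" "y2 \<in> N w" "y3 \<in> N w" using B_sub_Nu[OF wNI] y by auto
    have na: "\<not> adj z y1" "\<not> adj z y2" "\<not> adj z y3" using B_out[OF h z(2)] y by auto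
    have zy: "z \<noteq> y1" "z \<noteq> y2" "z \<noteq> y3" using z(2) y unfolding Bv_def by auto
    show False using high_Hdeg[OF hw z(1) yN y(4) y(6) y(5) na zy] .
  next
    case False
    let ?D = "{y \<in> N w. y \<noteq> u \<and> \<not> adj u y}"
    let ?A = "N w - insert u ?D"
    have cD: "card ?D \<le> 2" using high_Hdeg2[OF hw uNw] .
    have fD: "finite ?D" using fin_N by simp
    have "card ?A \<ge> card (N w) - card (insert u ?D)" by (rule diff_card_le_card_Diff) (simp add: fD)
    moreover have "card (insert u ?D) \<le> 3" using cD fD by (simp add: card_insert_if)
    ultimately have cA: "card ?A \<ge> r - 2" using cw by simp
    have AN: "?A \<subseteq> N u"
    proof
      fix y assume "y \<in> ?A"
      then have "y \<in> N w" "y \<noteq> u" "adj u y" by auto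
      then show "y \<in> N u" using in_N adj_sym by simp
    qed
    have AB: "?A \<inter> Bv v = {}"
    proof -
      { fix y assume y1: "y \<in> ?A" and y2: "y \<in> Bv v"
        have "adj y w" using y1 in_N by simp
        then have "adj w y" using adj_sym by simp
        moreover have "\<not> adj w y" using B_out[OF h False y2] .
        ultimately have False by simp }
      then show ?thesis by blast
    qed
    have wA: "w \<notin> ?A" using notin_N[of w] by simp
    have wB: "w \<notin> Bv v" using nB .
    have sub: "Bv v \<union> ?A \<union> {w} \<subseteq> N u" using B_sub_Nu[OF u] AN wNu by blast
    have fA: "finite ?A" using fin_N by simp
    have "card (Bv v \<union> ?A \<union> {w}) = card (Bv v) + card ?A + 1"
      using AB wA wB fin_B fA by (simp add: card_Un_disjoint Int_commute)
    moreover have "card (Bv v \<union> ?A \<union> {w}) \<le> r + 1" using card_mono[OF fin_N sub] card_N[of u] by simp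
    ultimately show False using cA B_ge[OF h] r5 by simp
  qed
qed

lemma K_quad:
  assumes c: "card (N w) = r + 1" and m: "a \<in> N w" "b \<in> N w" "c \<in> N w" "d \<in> N w"
    and ne: "a \<noteq> b" "a \<noteq> c" "a \<noteq> d" "b \<noteq> c" "b \<noteq> d" "c \<noteq> d"
    and na: "\<not> adj a b" "\<not> adj c d"
  shows "kk w \<le> 4 * r - 8"
proof -
  have "kk w \<le> card {T. T \<subseteq> N w \<and> card T = 3 \<and> (a \<in> T \<or> b \<in> T) \<and> (c \<in> T \<or> d \<in> T)}"
  proof (rule kk_via[OF c])
    fix T assume T: "T \<in> cov3 w"
    show "(a \<in> T \<or> b \<in> T) \<and> (c \<in> T \<or> d \<in> T)"
      using hit[OF T m(1) m(2) ne(1) na(1)] hit[OF T m(3) m(4) ne(6) na(2)] by blast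
  qed
  also have "\<dots> \<le> 4 * card (N w) - 12" by (rule K1[OF fin_N m ne])
  finally show ?thesis using c by simp
qed

lemma K_path:
  assumes c: "card (N w) = r + 1" and m: "a \<in> N w" "b \<in> N w" "c \<in> N w" "d \<in> N w"
    and ne: "a \<noteq> b" "a \<noteq> c" "a \<noteq> d" "b \<noteq> c" "b \<noteq> d" "c \<noteq> d"
    and na: "\<not> adj a b" "\<not> adj b c" "\<not> adj c d"
  shows "kk w \<le> 3 * r - 5"
proof -
  have "kk w \<le> card {T. T \<subseteq> N w \<and> card T = 3 \<and> (a \<in> T \<or> b \<in> T) \<and> (b \<in> T \<or> c \<in> T) \<and> (c \<in> T \<or> d \<in> T)}"
  proof (rule kk_via[OF c])
    fix T assume T: "T \<in> cov3 w"
    show "(a \<in> T \<or> b \<in> T) \<and> (b \<in> T \<or> c \<in> T) \<and> (c \<in> T \<or> d \<in> T)"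
      using hit[OF T m(1) m(2) ne(1) na(1)] hit[OF T m(2) m(3) ne(4) na(2)] hit[OF T m(3) m(4) ne(6) na(3)] by blast
  qed
  also have "\<dots> \<le> 3 * card (N w) - 8" by (rule K3[OF fin_N m ne])
  finally show ?thesis using c by simp
qed

lemma K_tri:
  assumes c: "card (N w) = r + 1" and m: "a \<in> N w" "b \<in> N w" "c \<in> N w"
    and ne: "a \<noteq> b" "a \<noteq> c" "b \<noteq> c"
    and na: "\<not> adj a b" "\<not> adj b c" "\<not> adj a c"
  shows "kk w \<le> 3 * r - 5"
proof -
  have "kk w \<le> card {T. T \<subseteq> N w \<and> card T = 3 \<and> (a \<in> T \<or> b \<in> T) \<and> (b \<in> T \<or> c \<in> T) \<and> (a \<in> T \<or> c \<in> T)}"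
  proof (rule kk_via[OF c])
    fix T assume T: "T \<in> cov3 w"
    show "(a \<in> T \<or> b \<in> T) \<and> (b \<in> T \<or> c \<in> T) \<and> (a \<in> T \<or> c \<in> T)"
      using hit[OF T m(1) m(2) ne(1) na(1)] hit[OF T m(2) m(3) ne(3) na(2)] hit[OF T m(1) m(3) ne(2) na(3)] by blast
  qed
  also have "\<dots> \<le> 3 * card (N w) - 8" by (rule K2[OF fin_N m ne])
  finally show ?thesis using c by simp
qed

lemma NI_sub_B_N: assumes h: "high v" and w: "w \<in> Bv v" shows "NI v \<subseteq> N w" "card (N w) = r + 1"
proof -
  have Nw: "N w = insert v (N v) - {w}" by (rule B_N[OF h w])
  have "w \<notin> NI v" using w B_NI_disj[of v] by blast
  then show "NI v \<subseteq> N w" using Nw NI_sub by blast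
  show "card (N w) = r + 1" using Nw high_deg[OF h] w unfolding Bv_def using notin_N[of v] fin_N
    by (auto simp: card_Diff_singleton)
qed

lemma sum_le_card:
  fixes f :: "nat \<Rightarrow> real"
  assumes "finite B" "S \<subseteq> B" "\<And>w. w \<in> S \<Longrightarrow> f w \<le> M" "0 \<le> M"
  shows "sum f S \<le> real (card B) * M"
proof -
  have fS: "finite S" using assms(1,2) finite_subset by blast
  have "sum f S \<le> sum (\<lambda>_. M) S" using assms(3) by (intro sum_mono) auto
  also have "\<dots> = real (card S) * M" by simp
  also have "\<dots> \<le> real (card B) * M" using card_mono[OF assms(1,2)] assms(4) by (intro mult_right_mono) auto
  finally show ?thesis .
qed

lemma nums:
  "(real r - 2) * ((4 * real r - 8) - CC) / 4 \<le> CC - (2 * real r - 3)"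
  "(real r - 2) * ((3 * real r - 5) - CC) / 4 \<le> CC - (2 * real r - 2)"
  "(real r - 1) * ((3 * real r - 5) - CC) / 3 \<le> CC - (2 * real r - 2)"
proof -
  have r: "real r \<ge> 5" using r5 by simp
  have cc: "CC * (real r + 2) = 4 * (real r - 1)^2" unfolding CC_def using r by simp
  have a: "real r * (real r - 5) \<ge> 0" using r by simp
  show "(real r - 2) * ((4 * real r - 8) - CC) / 4 \<le> CC - (2 * real r - 3)"
  proof -
    have "(real r - 2) * ((4 * real r - 8) - CC) \<le> 4 * (CC - (2 * real r - 3))"
    proof -
      have "(real r - 2) * ((4 * real r - 8) - CC) - 4 * (CC - (2 * real r - 3)) =
        (real r - 2) * (4 * real r - 8) + 4 * (2 * real r - 3) - CC * (real r + 2)"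
        by (simp add: algebra_simps)
      also have "\<dots> = 0" unfolding cc by (simp add: power2_eq_square algebra_simps)
      finally show ?thesis by simp
    qed
    then show ?thesis by simp
  qed
  show "(real r - 2) * ((3 * real r - 5) - CC) / 4 \<le> CC - (2 * real r - 2)"
  proof -
    have "(real r - 2) * ((3 * real r - 5) - CC) \<le> 4 * (CC - (2 * real r - 2))"
    proof -
      have "(real r - 2) * ((3 * real r - 5) - CC) - 4 * (CC - (2 * real r - 2)) =
        (real r - 2) * (3 * real r - 5) + 4 * (2 * real r - 2) - CC * (real r + 2)"
        by (simp add: algebra_simps)
      also have "\<dots> = - (real r * (real r - 5) + 2)" unfolding cc by (simp add: power2_eq_square algebra_simps)
      finally show ?thesis using a by argo
    qed
    then show ?thesis by simp
  qed
  show "(real r - 1) * ((3 * real r - 5) - CC) / 3 \<le> CC - (2 * real r - 2)"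
  proof -
    have "(real r - 1) * ((3 * real r - 5) - CC) \<le> 3 * (CC - (2 * real r - 2))"
    proof -
      have "(real r - 1) * ((3 * real r - 5) - CC) - 3 * (CC - (2 * real r - 2)) =
        (real r - 1) * (3 * real r - 5) + 3 * (2 * real r - 2) - CC * (real r + 2)"
        by (simp add: algebra_simps)
      also have "\<dots> = - ((real r - 1) * (real r - 5))" unfolding cc by (simp add: power2_eq_square algebra_simps)
      finally show ?thesis using r by (smt (verit) mult_nonneg_nonneg)
    qed
    then show ?thesis by simp
  qed
qed

lemma key_bound:
  assumes h: "high v" and u: "u \<in> NI v"
  shows "\<exists>K. (\<forall>w \<in> Bv v. real (kk w) \<le> K) \<and>
     real (card (Bv v)) * ((K - CC) / real (card (NI v))) \<le> CC - real (kk u)"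
proof -
  have r: "real r \<ge> 5" using r5 by simp
  have Bw: "\<And>w. w \<in> Bv v \<Longrightarrow> NI v \<subseteq> N w \<and> card (N w) = r + 1" using NI_sub_B_N[OF h] by blast
  have ug: "real (kk u) \<le> 2 * real r - 2" using recv_kk_gen[OF h u] r5 by simp
  from high_cases[OF h] show ?thesis
  proof
    assume "\<exists>a b c d. quad v a b c d \<and> NI v = {a,b,c,d}"
    then obtain a b c d where q: "quad v a b c d" and NIv: "NI v = {a,b,c,d}" by blast
    have q': "a \<noteq> b" "a \<noteq> c" "a \<noteq> d" "b \<noteq> c" "b \<noteq> d" "c \<noteq> d" "\<not> adj a b" "\<not> adj c d"
      using q unfolding quad_def by auto
    have m4: "card (NI v) = 4" using NIv q' by simp
    have cB: "real (card (Bv v)) = real r - 2" using B_card[OF h] m4 r5 by simp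
    have inW: "\<And>w. w \<in> Bv v \<Longrightarrow> a \<in> N w \<and> b \<in> N w \<and> c \<in> N w \<and> d \<in> N w \<and> card (N w) = r + 1"
      using Bw NIv by auto
    show ?thesis
    proof (cases "adj a c \<and> adj a d \<and> adj b c \<and> adj b d")
      case True
      have Kb: "\<forall>w \<in> Bv v. real (kk w) \<le> 4 * real r - 8"
      proof
        fix w assume w: "w \<in> Bv v"
        have "kk w \<le> 4 * r - 8" using K_quad[of w a b c d] inW[OF w] q' by simp
        then show "real (kk w) \<le> 4 * real r - 8" using r5 by simp
      qed
      have sy: "adj c a" "adj d a" "adj c b" "adj d b" "\<not> adj b a" "\<not> adj d c" using True q' adj_sym by auto
      have aN: "a \<in> NI v" "b \<in> NI v" "c \<in> NI v" "d \<in> NI v" using NIv by auto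
      have "kk u \<le> 2 * r - 3"
      proof -
        have "u \<in> {a,b,c,d}" using u NIv by simp
        then consider "u = a" | "u = b" | "u = c" | "u = d" by blast
        then show ?thesis
        proof cases
          case 1 then show ?thesis using recv_kk_ref[OF h u, of c d] aN sy q' in_N by simp
        next
          case 2 then show ?thesis using recv_kk_ref[OF h u, of c d] aN sy q' in_N by simp
        next
          case 3 then show ?thesis using recv_kk_ref[OF h u, of a b] aN sy True q' in_N by simp
        next
          case 4 then show ?thesis using recv_kk_ref[OF h u, of a b] aN sy True q' in_N by simp
        qed
      qed
      then have "real (kk u) \<le> 2 * real r - 3" using r5 by simp
      then show ?thesis using Kb cB m4 nums(1) by (intro exI[of _ "4 * real r - 8"]) auto
    next
      case False
      have Kb: "\<forall>w \<in> Bv v. real (kk w) \<le> 3 * real r - 5"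
      proof
        fix w assume w: "w \<in> Bv v"
        note iw = inW[OF w]
        have sy: "\<not> adj b a" "\<not> adj d c" using q' adj_sym by auto
        have "kk w \<le> 3 * r - 5"
        proof -
          from False consider "\<not> adj a c" | "\<not> adj a d" | "\<not> adj b c" | "\<not> adj b d" by blast
          then show ?thesis
          proof cases
            case 1 then show ?thesis using K_path[of w b a c d] iw q' sy by auto
          next
            case 2 then show ?thesis using K_path[of w b a d c] iw q' sy by auto
          next
            case 3 then show ?thesis using K_path[of w a b c d] iw q' sy by auto
          next
            case 4 then show ?thesis using K_path[of w a b d c] iw q' sy by auto
          qed
        qed
        then show "real (kk w) \<le> 3 * real r - 5" using r5 by simp
      qed
      show ?thesis using Kb cB m4 nums(2) ug by (intro exI[of _ "3 * real r - 5"]) auto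
    qed
  next
    assume "\<exists>a b c. a \<in> N v \<and> b \<in> N v \<and> c \<in> N v \<and> a \<noteq> b \<and> a \<noteq> c \<and> b \<noteq> c \<and>
     \<not> adj a b \<and> \<not> adj b c \<and> \<not> adj a c \<and> NI v = {a,b,c}"
    then obtain a b c where t: "a \<noteq> b" "a \<noteq> c" "b \<noteq> c" "\<not> adj a b" "\<not> adj b c" "\<not> adj a c"
      and NIv: "NI v = {a,b,c}" by blast
    have m3: "card (NI v) = 3" using NIv t by simp
    have cB: "real (card (Bv v)) = real r - 1" using B_card[OF h] m3 r5 by simp
    have Kb: "\<forall>w \<in> Bv v. real (kk w) \<le> 3 * real r - 5"
    proof
      fix w assume w: "w \<in> Bv v"
      have "kk w \<le> 3 * r - 5" using K_tri[of w a b c] Bw[OF w] NIv t by simp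
      then show "real (kk w) \<le> 3 * real r - 5" using r5 by simp
    qed
    show ?thesis using Kb cB m3 nums(3) ug by (intro exI[of _ "3 * real r - 5"]) auto
  qed
qed

lemma high_not_recv: "high u \<Longrightarrow> high w \<Longrightarrow> u \<notin> NI w"
proof
  assume hu: "high u" and hw: "high w" and u: "u \<in> NI w"
  have "kk u \<le> 2 * r - 2" using recv_kk_gen[OF hw u] .
  then have "real (kk u) \<le> real (2 * r - 1)" by simp
  then show False using hu CC_facts(1) unfolding high_def by linarith
qed

lemma recv_sum:
  assumes nh: "\<not> high u"
  shows "(\<Sum>w\<in>{w\<in>V. high w \<and> u \<in> NI w}. (real (kk w) - CC) / real (card (NI w))) \<le> CC - real (kk u)"
proof (cases "{w\<in>V. high w \<and> u \<in> NI w} = {}")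
  case True
  have "CC - real (kk u) \<ge> 0" using nh unfolding high_def by simp
  then show ?thesis using True by (simp only: sum.empty)
next
  case False
  then obtain v where v: "v \<in> V" "high v" "u \<in> NI v" by blast
  let ?S = "{w\<in>V. high w \<and> u \<in> NI w}"
  have SB: "?S \<subseteq> Bv v"
  proof
    fix w assume "w \<in> ?S"
    then have "high w" "u \<in> NI w" by auto
    then show "w \<in> Bv v" using senders[OF v(2) v(3)] by simp
  qed
  have NIeq: "\<And>w. w \<in> ?S \<Longrightarrow> NI w = NI v"
  proof -
    fix w assume "w \<in> ?S"
    then have "w \<in> Bv v" using SB by (rule subsetD[rotated])
    then show "NI w = NI v" by (rule B_NI[OF v(2)])
  qed
  have "(\<Sum>w\<in>?S. (real (kk w) - CC) / real (card (NI w))) = (\<Sum>w\<in>?S. (real (kk w) - CC) / real (card (NI v)))"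
  proof (rule sum.cong[OF refl])
    fix w assume "w \<in> ?S"
    then show "(real (kk w) - CC) / real (card (NI w)) = (real (kk w) - CC) / real (card (NI v))"
      using NIeq[of w] by simp
  qed
  obtain K where K: "\<forall>w \<in> Bv v. real (kk w) \<le> K"
    "real (card (Bv v)) * ((K - CC) / real (card (NI v))) \<le> CC - real (kk u)"
    using key_bound[OF v(2) v(3)] by blast
  have m: "real (card (NI v)) > 0" using card_NI[OF v(2)] by auto
  have vB: "v \<in> Bv v" unfolding Bv_def by simp
  have "real (kk v) \<le> K" using K(1) vB by blast
  then have KC: "K - CC \<ge> 0" using v(2) unfolding high_def by simp
  have "(\<Sum>w\<in>?S. (real (kk w) - CC) / real (card (NI v))) \<le> real (card (Bv v)) * ((K - CC) / real (card (NI v)))"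
  proof (rule sum_le_card[OF fin_B SB])
    fix w assume "w \<in> ?S"
    then have "real (kk w) \<le> K" using K(1) SB by blast
    then show "(real (kk w) - CC) / real (card (NI v)) \<le> (K - CC) / real (card (NI v))"
      using m by (intro divide_right_mono) auto
  next
    show "0 \<le> (K - CC) / real (card (NI v))" using KC m by simp
  qed
  then show ?thesis using K(2) \<open>(\<Sum>w\<in>?S. _) = _\<close> by linarith
qed

lemma total: "(\<Sum>v\<in>V. real (kk v)) \<le> CC * real (card V)"
proof -
  let ?H = "{v\<in>V. high v}"
  let ?f = "\<lambda>v. (real (kk v) - CC) / real (card (NI v))"
  have fH: "finite ?H" using finV by simp
  have NIV: "\<And>v. NI v \<subseteq> V" using NI_sub N_sub by blast
  have "(\<Sum>v\<in>?H. real (kk v) - CC) = (\<Sum>v\<in>?H. \<Sum>u\<in>{u\<in>V. u \<in> NI v}. ?f v)"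
  proof (rule sum.cong[OF refl])
    fix v assume "v \<in> ?H"
    then have hv: "high v" by simp
    have e: "{u\<in>V. u \<in> NI v} = NI v" using NIV by blast
    have m: "real (card (NI v)) > 0" using card_NI[OF hv] by auto
    show "real (kk v) - CC = (\<Sum>u\<in>{u\<in>V. u \<in> NI v}. ?f v)" unfolding e using m by simp
  qed
  also have "\<dots> = (\<Sum>u\<in>V. \<Sum>v\<in>{v\<in>?H. u \<in> NI v}. ?f v)"
    by (rule sum.swap_restrict[OF fH finV])
  also have "\<dots> \<le> (\<Sum>u\<in>V. if high u then 0 else CC - real (kk u))"
  proof (rule sum_mono)
    fix u assume "u \<in> V"
    have e: "{v\<in>?H. u \<in> NI v} = {w\<in>V. high w \<and> u \<in> NI w}" by auto
    show "(\<Sum>v\<in>{v\<in>?H. u \<in> NI v}. ?f v) \<le> (if high u then 0 else CC - real (kk u))"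
    proof (cases "high u")
      case True
      then have E: "{v\<in>?H. u \<in> NI v} = {}" using high_not_recv by blast
      show ?thesis unfolding E using True by simp
    next
      case False
      then show ?thesis unfolding e using recv_sum[OF False] by simp
    qed
  qed
  finally have A: "(\<Sum>v\<in>?H. real (kk v) - CC) \<le> (\<Sum>u\<in>V. if high u then 0 else CC - real (kk u))" .
  have B: "(\<Sum>u\<in>V. if high u then 0 else CC - real (kk u)) = (\<Sum>u\<in>V - ?H. CC - real (kk u))"
    by (rule sum.mono_neutral_cong_right) (auto simp: finV)
  have C: "(\<Sum>v\<in>V. real (kk v) - CC) = (\<Sum>v\<in>?H. real (kk v) - CC) + (\<Sum>v\<in>V - ?H. real (kk v) - CC)"
  proof -
    have "?H \<subseteq> V" by auto
    from sum.subset_diff[OF this finV, of "\<lambda>v. real (kk v) - CC"] show ?thesis by linarith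
  qed
  have D: "(\<Sum>v\<in>V - ?H. real (kk v) - CC) = - (\<Sum>u\<in>V - ?H. CC - real (kk u))"
    by (simp add: sum_negf[symmetric])
  have "(\<Sum>v\<in>V. real (kk v) - CC) \<le> 0" using A B C D by linarith
  then show ?thesis by (simp add: sum_subtractf mult.commute)
qed

lemma fin_K: "finite {Q. clq Q \<and> card Q = r - 1}"
  by (rule finite_subset[of _ "Pow V"]) (auto simp: clq_def finV)

lemma dc: "(\<Sum>v\<in>V. kk v) = (r - 1) * card {Q. clq Q \<and> card Q = r - 1}"
proof -
  let ?K = "{Q. clq Q \<and> card Q = r - 1}"
  have "(\<Sum>v\<in>V. kk v) = (\<Sum>v\<in>V. \<Sum>Q\<in>{Q\<in>?K. v \<in> Q}. (1::nat))"
    unfolding kk_def by (intro sum.cong) auto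
  also have "\<dots> = (\<Sum>Q\<in>?K. \<Sum>v\<in>{v\<in>V. v \<in> Q}. (1::nat))"
    by (rule sum.swap_restrict[OF finV fin_K])
  also have "\<dots> = (\<Sum>Q\<in>?K. r - 1)"
  proof (rule sum.cong[OF refl])
    fix Q assume Q: "Q \<in> ?K"
    then have "{v\<in>V. v \<in> Q} = Q" unfolding clq_def by auto
    then show "(\<Sum>v\<in>{v\<in>V. v \<in> Q}. (1::nat)) = r - 1" using Q by simp
  qed
  also have "\<dots> = (r - 1) * card ?K" by simp
  finally show ?thesis .
qed

lemma main_bound: "real (card {Q. clq Q \<and> card Q = r - 1}) * (real r - 1) \<le> CC * real (card V)"
proof -
  have "real ((r - 1) * card {Q. clq Q \<and> card Q = r - 1}) = (\<Sum>v\<in>V. real (kk v))"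
    unfolding dc[symmetric] by simp
  then show ?thesis using total r5 by (simp add: of_nat_diff mult.commute)
qed

end


lemma class_facts:
  assumes G: "G \<in> graph_class (r + 1) r"
  shows "finite (fst G)" "\<And>e. e \<in> snd G \<Longrightarrow> e \<subseteq> fst G \<and> card e = 2"
    "\<And>v. v \<in> fst G \<Longrightarrow> card {u \<in> fst G. {u,v} \<in> snd G} \<le> r + 1"
    "\<And>S. is_clique G S \<Longrightarrow> card S \<le> r"
proof -
  have sg: "simple_graph G" and md: "max_degree G \<le> r + 1" and cn: "clique_number G \<le> r"
    using G unfolding graph_class_def by auto
  show f: "finite (fst G)" using sg unfolding simple_graph_def by simp
  show "\<And>e. e \<in> snd G \<Longrightarrow> e \<subseteq> fst G \<and> card e = 2" using sg unfolding simple_graph_def by simp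
  show "\<And>v. v \<in> fst G \<Longrightarrow> card {u \<in> fst G. {u,v} \<in> snd G} \<le> r + 1"
  proof -
    fix v assume v: "v \<in> fst G"
    have "degree G v \<le> Max (insert 0 (degree G ` fst G))" using f v by (intro Max_ge) auto
    then show "card {u \<in> fst G. {u,v} \<in> snd G} \<le> r + 1" using md unfolding max_degree_def degree_def by simp
  qed
  show "\<And>S. is_clique G S \<Longrightarrow> card S \<le> r"
  proof -
    fix S assume S: "is_clique G S"
    have fin: "finite (card ` {S. is_clique G S})"
      by (rule finite_imageI, rule finite_subset[of _ "Pow (fst G)"]) (auto simp: is_clique_def f)
    have "card S \<le> Max (card ` {S. is_clique G S})" using S fin by (intro Max_ge) auto
    then show "card S \<le> r" using cn unfolding clique_number_def by simp
  qed
qed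

lemma alg1: "(a::real) > 0 \<Longrightarrow> b > 0 \<Longrightarrow> 4 * a^2 / b / a = 4 * a / b"
  by (simp add: power2_eq_square)

lemma upper:
  assumes G: "G \<in> graph_class (r + 1) r" and r: "r \<ge> 5" and n: "card (fst G) \<ge> 1"
  shows "rho (r - 1) G \<le> (4 * real r - 4) / (real r + 2)"
proof -
  note cf = class_facts[OF G]
  interpret g: GG "fst G" "snd G" r
  proof
    show "finite (fst G)" by (rule cf(1))
    show "\<And>e. e \<in> snd G \<Longrightarrow> e \<subseteq> fst G \<and> card e = 2" by (rule cf(2))
    show "\<And>v. v \<in> fst G \<Longrightarrow> card {u \<in> fst G. {u,v} \<in> snd G} \<le> r + 1" by (rule cf(3))
    show "\<And>S. S \<subseteq> fst G \<Longrightarrow> \<forall>u\<in>S. \<forall>w\<in>S. u \<noteq> w \<longrightarrow> {u,w} \<in> snd G \<Longrightarrow> card S \<le> r"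
      using cf(4) unfolding is_clique_def by blast
    show "5 \<le> r" by (rule r)
  qed
  have eq: "{S. is_clique G S \<and> card S = r - 1} = {Q. g.clq Q \<and> card Q = r - 1}"
    unfolding is_clique_def g.clq_def g.adj_def by simp
  have kc: "k_count (r - 1) G = card {Q. g.clq Q \<and> card Q = r - 1}" unfolding k_count_def eq ..
  have mb: "real (k_count (r - 1) G) * (real r - 1) \<le> g.CC * real (card (fst G))"
    using g.main_bound unfolding kc .
  have np: "real (card (fst G)) > 0" using n by simp
  have rp: "real r - 1 > 0" using r by simp
  have "rho (r - 1) G = real (k_count (r - 1) G) / real (card (fst G))" unfolding rho_def ..
  also have "\<dots> \<le> g.CC / (real r - 1)"
    using mb np rp by (simp add: field_simps)
  also have "g.CC / (real r - 1) = (4 * real r - 4) / (real r + 2)"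
  proof -
    have r2: "real r + 2 > 0" by simp
    have "4 * (real r - 1)^2 / (real r + 2) / (real r - 1) = 4 * (real r - 1) / (real r + 2)"
      using alg1[OF rp r2] .
    then show ?thesis unfolding g.CC_def by (simp add: algebra_simps)
  qed
  finally show ?thesis .
qed



lemma tur_edge: "{u,v} \<in> snd (turan_graph n r) \<longleftrightarrow> u < n \<and> v < n \<and> u mod r \<noteq> v mod r"
  unfolding turan_graph_def by (auto simp: doubleton_eq_iff)

lemma modeq:
  fixes r u v :: nat
  assumes r: "r \<ge> 5" and u: "u < r + 2" and v: "v < r + 2" and ne: "u \<noteq> v" and m: "u mod r = v mod r"
  shows "(u = 0 \<and> v = r) \<or> (u = r \<and> v = 0) \<or> (u = 1 \<and> v = r + 1) \<or> (u = r + 1 \<and> v = 1)"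
proof -
  have c: "\<And>x::nat. x < r + 2 \<Longrightarrow> (x < r \<and> x mod r = x) \<or> (x = r \<and> x mod r = 0) \<or> (x = r + 1 \<and> x mod r = 1)"
  proof -
    fix x assume "x < r + 2"
    then have "x < r \<or> x = r \<or> x = r + 1" by auto
    moreover have "(r + 1) mod r = 1" using r by (simp add: mod_Suc)
    ultimately show "(x < r \<and> x mod r = x) \<or> (x = r \<and> x mod r = 0) \<or> (x = r + 1 \<and> x mod r = 1)"
      using r by auto
  qed
  show ?thesis using c[OF u] c[OF v] ne m r by auto
qed

lemma tur_class:
  assumes r: "r \<ge> 5"
  shows "turan_graph (r + 2) r \<in> graph_class (r + 1) r"
proof -
  let ?T = "turan_graph (r + 2) r"
  have V: "fst ?T = {0..<r+2}" unfolding turan_graph_def by simp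
  have sg: "simple_graph ?T"
    unfolding simple_graph_def
  proof
    show "finite (fst ?T)" using V by simp
    show "\<forall>e\<in>snd ?T. e \<subseteq> fst ?T \<and> card e = 2"
    proof
      fix e assume "e \<in> snd ?T"
      then obtain u v where e: "e = {u,v}" "u < r + 2" "v < r + 2" "u mod r \<noteq> v mod r"
        unfolding turan_graph_def by auto
      then have "u \<noteq> v" by auto
      then show "e \<subseteq> fst ?T \<and> card e = 2" using e V by auto
    qed
  qed
  have deg: "\<And>v. v \<in> fst ?T \<Longrightarrow> degree ?T v \<le> r + 1"
  proof -
    fix v assume v: "v \<in> fst ?T"
    have "{u \<in> fst ?T. {u,v} \<in> snd ?T} \<subseteq> fst ?T - {v}" using tur_edge by auto
    moreover have "finite (fst ?T - {v})" using V by simp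
    ultimately have "degree ?T v \<le> card (fst ?T - {v})" unfolding degree_def by (intro card_mono)
    also have "\<dots> = r + 1" using V v by simp
    finally show "degree ?T v \<le> r + 1" .
  qed
  have fT: "finite (fst ?T)" using V by simp
  have md: "max_degree ?T \<le> r + 1"
    unfolding max_degree_def using deg fT by (subst Max_le_iff) auto
  have cl: "\<And>S. is_clique ?T S \<Longrightarrow> card S \<le> r"
  proof -
    fix S assume S: "is_clique ?T S"
    have inj: "inj_on (\<lambda>x. x mod r) S"
    proof (rule inj_onI)
      fix x y assume "x \<in> S" "y \<in> S" "x mod r = y mod r"
      then show "x = y" using S tur_edge unfolding is_clique_def by blast
    qed
    have "(\<lambda>x. x mod r) ` S \<subseteq> {0..<r}" using r by auto
    then have "card ((\<lambda>x. x mod r) ` S) \<le> r" using card_mono[of "{0..<r}"] by fastforce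
    then show "card S \<le> r" using card_image[OF inj] by simp
  qed
  have cn: "clique_number ?T \<le> r"
  proof -
    have fin: "finite (card ` {S. is_clique ?T S})"
      by (rule finite_imageI, rule finite_subset[of _ "Pow (fst ?T)"]) (use fT in \<open>auto simp: is_clique_def\<close>)
    have ne: "card ` {S. is_clique ?T S} \<noteq> {}"
    proof -
      have "is_clique ?T {}" unfolding is_clique_def by simp
      then show ?thesis by blast
    qed
    show ?thesis unfolding clique_number_def using fin ne cl by (subst Max_le_iff) auto
  qed
  show ?thesis unfolding graph_class_def using sg md cn by simp
qed

lemma inj3: "inj_on (\<lambda>z. W - {x,y,z}) (W - ({x,y} \<union> X))"
proof (rule inj_onI)
  fix z z' assume z: "z \<in> W - ({x,y} \<union> X)" and z': "z' \<in> W - ({x,y} \<union> X)"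
    and e: "W - {x,y,z} = W - {x,y,z'}"
  have "z \<notin> W - {x,y,z'}" using e z by auto
  then show "z = z'" using z by auto
qed

lemma tur_cl:
  assumes r: "r \<ge> 5" and xyz: "x < r + 2" "y < r + 2" "z < r + 2" "x \<noteq> y" "y \<noteq> z" "x \<noteq> z"
    and h1: "x = 0 \<or> y = 0 \<or> z = 0 \<or> x = r \<or> y = r \<or> z = r"
    and h2: "x = 1 \<or> y = 1 \<or> z = 1 \<or> x = r + 1 \<or> y = r + 1 \<or> z = r + 1"
  shows "is_clique (turan_graph (r + 2) r) ({0..<r+2} - {x,y,z}) \<and> card ({0..<r+2} - {x,y,z}) = r - 1"
proof
  let ?S = "{0..<r+2} - {x,y,z}"
  show "is_clique (turan_graph (r + 2) r) ?S"
    unfolding is_clique_def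
  proof (intro conjI ballI impI)
    show "?S \<subseteq> fst (turan_graph (r + 2) r)" unfolding turan_graph_def by auto
    fix u v assume u: "u \<in> ?S" and v: "v \<in> ?S" and ne: "u \<noteq> v"
    have "u mod r \<noteq> v mod r"
    proof
      assume m: "u mod r = v mod r"
      have "u < r + 2" "v < r + 2" using u v by auto
      from modeq[OF r this ne m] show False using u v h1 h2 by auto
    qed
    then show "{u,v} \<in> snd (turan_graph (r + 2) r)" using tur_edge u v by auto
  qed
  have "card ?S = card {0..<r+2} - card {x,y,z}" using xyz by (intro card_Diff_subset) auto
  then show "card ?S = r - 1" using xyz by simp
qed

lemma tur_count:
  assumes r: "r \<ge> 5"
  shows "k_count (r - 1) (turan_graph (r + 2) r) \<ge> 4 * r - 4"
proof -
  let ?W = "{0..<r+2}"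
  let ?T = "turan_graph (r + 2) r"
  let ?A1 = "(\<lambda>z. ?W - {0,1,z}) ` (?W - ({0,1} \<union> {}))"
  let ?A2 = "(\<lambda>z. ?W - {0,r+1,z}) ` (?W - ({0,r+1} \<union> {1}))"
  let ?A3 = "(\<lambda>z. ?W - {r,1,z}) ` (?W - ({r,1} \<union> {0}))"
  let ?A4 = "(\<lambda>z. ?W - {r,r+1,z}) ` (?W - ({r,r+1} \<union> {0,1}))"
  let ?F = "{S. is_clique ?T S \<and> card S = r - 1}"
  have sub: "?A1 \<union> ?A2 \<union> ?A3 \<union> ?A4 \<subseteq> ?F"
  proof -
    have "?A1 \<subseteq> ?F" using tur_cl[OF r, of 0 1] r by auto
    moreover have "?A2 \<subseteq> ?F" using tur_cl[OF r, of 0 "r+1"] r by auto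
    moreover have "?A3 \<subseteq> ?F" using tur_cl[OF r, of r 1] r by auto
    moreover have "?A4 \<subseteq> ?F" using tur_cl[OF r, of r "r+1"] r by auto
    ultimately show ?thesis by blast
  qed
  have finF: "finite ?F"
    by (rule finite_subset[of _ "Pow ?W"]) (auto simp: is_clique_def turan_graph_def)
  have c1: "card ?A1 = r"
  proof -
    have "?W - ({0,1} \<union> {}) = {2..<r+2}" by auto
    then show ?thesis using card_image[OF inj3[of ?W 0 1 "{}"]] by simp
  qed
  have c2: "card ?A2 = r - 1"
  proof -
    have "?W - ({0,r+1} \<union> {1}) = {2..<r+1}" by auto
    then show ?thesis using card_image[OF inj3[of ?W 0 "r+1" "{1}"]] by simp
  qed
  have c3: "card ?A3 = r - 1"
  proof -
    have "?W - ({r,1} \<union> {0}) = insert (r+1) {2..<r}" using r by auto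
    then show ?thesis using card_image[OF inj3[of ?W r 1 "{0}"]] r by simp
  qed
  have c4: "card ?A4 = r - 2"
  proof -
    have "?W - ({r,r+1} \<union> {0,1}) = {2..<r}" by auto
    then show ?thesis using card_image[OF inj3[of ?W r "r+1" "{0,1}"]] by simp
  qed
  have m1: "\<And>S. S \<in> ?A1 \<Longrightarrow> 0 \<notin> S \<and> 1 \<notin> S"
  proof -
    fix S assume "S \<in> ?A1"
    then obtain z where "S = ?W - {0,1,z}" by blast
    then show "0 \<notin> S \<and> 1 \<notin> S" by simp
  qed
  have m2: "\<And>S. S \<in> ?A2 \<Longrightarrow> 0 \<notin> S \<and> 1 \<in> S"
  proof -
    fix S assume "S \<in> ?A2"
    then obtain z where "S = ?W - {0,r+1,z}" "z \<noteq> 1" by blast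
    then show "0 \<notin> S \<and> 1 \<in> S" using r by simp
  qed
  have m3: "\<And>S. S \<in> ?A3 \<Longrightarrow> 0 \<in> S \<and> 1 \<notin> S"
  proof -
    fix S assume "S \<in> ?A3"
    then obtain z where "S = ?W - {r,1,z}" "z \<noteq> 0" by blast
    then show "0 \<in> S \<and> 1 \<notin> S" using r by simp
  qed
  have m4: "\<And>S. S \<in> ?A4 \<Longrightarrow> 0 \<in> S \<and> 1 \<in> S"
  proof -
    fix S assume "S \<in> ?A4"
    then obtain z where "S = ?W - {r,r+1,z}" "z \<noteq> 0" "z \<noteq> 1" by blast
    then show "0 \<in> S \<and> 1 \<in> S" using r by simp
  qed
  have d12: "?A1 \<inter> ?A2 = {}"
  proof (rule equals0I)
    fix S assume "S \<in> ?A1 \<inter> ?A2" then show False using m1[of S] m2[of S] by blast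
  qed
  have d123: "(?A1 \<union> ?A2) \<inter> ?A3 = {}"
  proof (rule equals0I)
    fix S assume "S \<in> (?A1 \<union> ?A2) \<inter> ?A3" then show False using m1[of S] m2[of S] m3[of S] by blast
  qed
  have d1234: "(?A1 \<union> ?A2 \<union> ?A3) \<inter> ?A4 = {}"
  proof (rule equals0I)
    fix S assume "S \<in> (?A1 \<union> ?A2 \<union> ?A3) \<inter> ?A4" then show False using m1[of S] m2[of S] m3[of S] m4[of S] by blast
  qed
  have f1: "finite ?A1" and f2: "finite ?A2" and f3: "finite ?A3" and f4: "finite ?A4" by simp_all
  have "card (?A1 \<union> ?A2 \<union> ?A3 \<union> ?A4) = card (?A1 \<union> ?A2 \<union> ?A3) + card ?A4"
    using card_Un_disjoint[OF _ f4 d1234] f1 f2 f3 by simp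
  also have "card (?A1 \<union> ?A2 \<union> ?A3) = card (?A1 \<union> ?A2) + card ?A3"
    using card_Un_disjoint[OF _ f3 d123] f1 f2 by simp
  also have "card (?A1 \<union> ?A2) = card ?A1 + card ?A2"
    using card_Un_disjoint[OF f1 f2 d12] by simp
  finally have "card (?A1 \<union> ?A2 \<union> ?A3 \<union> ?A4) = 4 * r - 4" using c1 c2 c3 c4 r by simp
  moreover have "card (?A1 \<union> ?A2 \<union> ?A3 \<union> ?A4) \<le> card ?F" using card_mono[OF finF sub] .
  ultimately have "card ?F \<ge> 4 * r - 4" by simp
  then show ?thesis unfolding k_count_def by simp
qed

theorem mainTheorem14:
  fixes r :: nat
  assumes "r \<ge> 5"
  shows "f_sup (r - 1) (r + 1) r = rho (r - 1) (turan_graph (r + 2) r)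
     \<and> rho (r - 1) (turan_graph (r + 2) r) = (4 * real r - 4) / (real r + 2)"
proof -
  let ?T = "turan_graph (r + 2) r"
  let ?c = "(4 * real r - 4) / (real r + 2)"
  have Tc: "?T \<in> graph_class (r + 1) r" by (rule tur_class[OF assms])
  have nT: "card (fst ?T) = r + 2" unfolding turan_graph_def by simp
  have up: "rho (r - 1) ?T \<le> ?c" using upper[OF Tc assms] nT by simp
  have k: "real (k_count (r - 1) ?T) \<ge> 4 * real r - 4"
  proof -
    have "real (k_count (r - 1) ?T) \<ge> real (4 * r - 4)" using tur_count[OF assms] by simp
    moreover have "real (4 * r - 4) = 4 * real r - 4" using assms by simp
    ultimately show ?thesis by simp
  qed
  have lo: "rho (r - 1) ?T \<ge> ?c"
  proof -
    have "real (r + 2) = real r + 2" by simp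
    then show ?thesis unfolding rho_def nT using divide_right_mono[OF k, of "real r + 2"] by (simp add: add.commute)
  qed
  have eqT: "rho (r - 1) ?T = ?c" using up lo by simp
  have "f_sup (r - 1) (r + 1) r = ?c"
    unfolding f_sup_def
  proof (rule cSup_eq_maximum)
    show "?c \<in> {rho (r - 1) G |G. G \<in> graph_class (r + 1) r \<and> 1 \<le> card (fst G)}"
      using Tc nT eqT by (intro CollectI exI[of _ ?T]) simp
    fix x assume "x \<in> {rho (r - 1) G |G. G \<in> graph_class (r + 1) r \<and> 1 \<le> card (fst G)}"
    then obtain G where G: "x = rho (r - 1) G" "G \<in> graph_class (r + 1) r" "1 \<le> card (fst G)" by blast
    show "x \<le> ?c" using upper[OF G(2) assms G(3)] G(1) by simp
  qed
  then show ?thesis using eqT by simp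
qed


end
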